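(* Let $\bar{\mathcal{L}}$ be the Laplacian of an undirected connected graph on $N\ge2$ nodes, let $\eta\ge0$, $\gamma\in\mathbb{R}$, and let $\bar P\in\mathbb{R}^{Nn\times Nn}$, $Q\in\mathbb{R}^{n\times n}$, $R\in\mathbb{R}^{m\times m}$ be symmetric positive definite. Consider the error dynamics when all agents are connected, $$\dot e(t)=\big(\bar F-\eta(\bar{\mathcal{L}}\otimes I_n)\big)e(t)+\mathcal{I}w(t)-\bar Jv(t),\qquad w(t)^TQw(t)\le1,\ v(t)^TRv(t)\le1.$$ If there exists $\alpha_3\ge0$ such that, with $M=\bar E^T\bar P\bar E$, $$\begin{bmatrix}(\gamma-2\alpha_3)M-\bar A_e^TM-M\bar A_e & -M\bar W & M\bar V\\ -\bar W^TM & \alpha_3Q & 0\\ \bar V^TM & 0 & \alpha_3R\end{bmatrix}\succ0,$$ then this error system is quadratically $\gamma$-bounded with Lyapunov matrix $\bar P$, i.e. whenever $w(t)^TQw(t)\le1$, $v(t)^TRv(t)\le1$ and $e(t)^T\bar Pe(t)\ge1$, one has $\frac{d}{dt}(e(t)^T\bar Pe(t))<\gamma\, e(t)^T\bar Pe(t)$.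
   Context: Data: $A\in\mathbb{R}^{n\times n}$; $B=[B_1\ \cdots\ B_N]$, $B_i\in\mathbb{R}^{n\times p_i}$; $K_i\in\mathbb{R}^{p_i\times n}$, $K=[K_1^T\cdots K_N^T]^T$; $A_{bk}=A+BK$; $C=[C_1^T\cdots C_N^T]^T$, $C_i\in\mathbb{R}^{m_i\times n}$, $m=\sum_im_i$; $L_i\in\mathbb{R}^{n\times m_i}$, $L=[L_1\ \cdots\ L_N]$. Define $\mathcal{I}=[I_n\ \cdots\ I_n]^T\in\mathbb{R}^{Nn\times n}$; $\bar J=N\,\mathrm{BlkDiag}(L_1,\dots,L_N)$; $\bar F$ the $N\times N$ block matrix with $(i,i)$ block $A_{bk}-NL_iC_i-B_iK_i$ and $(i,j)$ block $-B_jK_j$ for $i\ne j$; $H=[\tfrac1NA_{bk}-B_1K_1-L_1C_1\ \cdots\ \tfrac1NA_{bk}-B_NK_N-L_NC_N]\in\mathbb{R}^{n\times Nn}$. Let $S\in\mathbb{R}^{N\times(N-1)}$ satisfy $1_N^TS=0$, $S^TS=I_{N-1}$, $S^T\bar{\mathcal{L}}S=\Lambda^+$, where $\Lambda^+$ is the diagonal matrix of the positive eigenvalues of $\bar{\mathcal{L}}$ ($1_N$ is the all-ones vector). Set $\bar E=[\mathcal{I}\ \ S\otimes I_n]$, $$\bar A_e=\begin{bmatrix}A-LC & H(S\otimes I_n)\\ (S^T\otimes I_n)\bar F\mathcal{I} & (S^T\otimes I_n)\bar F(S\otimes I_n)-\eta(\Lambda^+\otimes I_n)\end{bmatrix},\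 \bar W=\begin{bmatrix}I_n\\(S^T\otimes I_n)\mathcal{I}\end{bmatrix},\ \bar V=\begin{bmatrix}L\\(S^T\otimes I_n)\bar J\end{bmatrix}.$$ *)

theory Defs
  imports Complex_Main "Jordan_Normal_Form.Matrix" "Jordan_Normal_Form.Char_Poly"
begin

definition kron :: "real mat \<Rightarrow> real mat \<Rightarrow> real mat" where
  "kron A B = mat (dim_row A * dim_row B) (dim_col A * dim_col B)
     (\<lambda>(i,j). A $$ (i div dim_row B, j div dim_col B) * B $$ (i mod dim_row B, j mod dim_col B))"

definition append_cols :: "real mat \<Rightarrow> real mat \<Rightarrow> real mat" where
  "append_cols A B = transpose_mat (transpose_mat A @\<^sub>r transpose_mat B)"

definition hcat :: "nat \<Rightarrow> real mat list \<Rightarrow> real mat" where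
  "hcat n Ms = foldr append_cols Ms (0\<^sub>m n 0)"

definition vcat :: "nat \<Rightarrow> real mat list \<Rightarrow> real mat" where
  "vcat n Ms = foldr append_rows Ms (0\<^sub>m 0 n)"

definition msum :: "nat \<Rightarrow> real mat list \<Rightarrow> real mat" where
  "msum n Ms = foldr (+) Ms (0\<^sub>m n n)"

definition pos_def :: "nat \<Rightarrow> real mat \<Rightarrow> bool" where
  "pos_def k M \<longleftrightarrow> M \<in> carrier_mat k k \<and> transpose_mat M = M \<and>
     (\<forall>x \<in> carrier_vec k. x \<noteq> 0\<^sub>v k \<longrightarrow> x \<bullet> (M *\<^sub>v x) > 0)"

definition undirected_graph :: "nat \<Rightarrow> (nat \<Rightarrow> nat \<Rightarrow> bool) \<Rightarrow> bool" where
  "undirected_graph N E \<longleftrightarrow> (\<forall>i<N. \<forall>j<N. E i j \<longleftrightarrow> E j i) \<and> (\<forall>i<N. \<not> E i i)"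

definition connected_graph :: "nat \<Rightarrow> (nat \<Rightarrow> nat \<Rightarrow> bool) \<Rightarrow> bool" where
  "connected_graph N E \<longleftrightarrow> (\<forall>i<N. \<forall>j<N. (\<lambda>a b. a < N \<and> b < N \<and> E a b)\<^sup>*\<^sup>* i j)"

definition laplacian :: "nat \<Rightarrow> (nat \<Rightarrow> nat \<Rightarrow> bool) \<Rightarrow> real mat" where
  "laplacian N E = mat N N (\<lambda>(i,j). if i = j then real (card {k. k < N \<and> E i k})
                                     else if E i j then -1 else 0)"

text \<open>Bs, Ks, Cs, Ls are the lists [B_1..B_N], [K_1..K_N], [C_1..C_N], [L_1..L_N].\<close>

definition Abk :: "nat \<Rightarrow> real mat \<Rightarrow> real mat list \<Rightarrow> real mat list \<Rightarrow> real mat" where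
  "Abk n A Bs Ks = A + msum n (map (\<lambda>i. Bs ! i * Ks ! i) [0..<length Bs])"

definition Istack :: "nat \<Rightarrow> nat \<Rightarrow> real mat" where
  "Istack N n = kron (mat N 1 (\<lambda>_. 1)) (1\<^sub>m n)"

definition Jbar :: "nat \<Rightarrow> real mat list \<Rightarrow> real mat" where
  "Jbar N Ls = real N \<cdot>\<^sub>m diag_block_mat Ls"

definition Fbar :: "nat \<Rightarrow> nat \<Rightarrow> real mat \<Rightarrow> real mat list \<Rightarrow> real mat list \<Rightarrow> real mat list
    \<Rightarrow> real mat list \<Rightarrow> real mat" where
  "Fbar N n A Bs Ks Cs Ls = mat (N * n) (N * n) (\<lambda>(r,c).
     let i = r div n; j = c div n in
     (if i = j then Abk n A Bs Ks - real N \<cdot>\<^sub>m (Ls ! i * Cs ! i) - Bs ! i * Ks ! i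
      else - (Bs ! j * Ks ! j)) $$ (r mod n, c mod n))"

definition Hmat :: "nat \<Rightarrow> nat \<Rightarrow> real mat \<Rightarrow> real mat list \<Rightarrow> real mat list \<Rightarrow> real mat list
    \<Rightarrow> real mat list \<Rightarrow> real mat" where
  "Hmat N n A Bs Ks Cs Ls = mat n (N * n) (\<lambda>(a,c).
     let j = c div n in
     ((1 / real N) \<cdot>\<^sub>m Abk n A Bs Ks - Bs ! j * Ks ! j - Ls ! j * Cs ! j) $$ (a, c mod n))"

definition Ebar :: "nat \<Rightarrow> nat \<Rightarrow> real mat \<Rightarrow> real mat" where
  "Ebar N n S = append_cols (Istack N n) (kron S (1\<^sub>m n))"

definition Aebar :: "nat \<Rightarrow> nat \<Rightarrow> real mat \<Rightarrow> real mat list \<Rightarrow> real mat list \<Rightarrow> real mat list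
    \<Rightarrow> real mat list \<Rightarrow> real \<Rightarrow> real mat \<Rightarrow> real mat \<Rightarrow> real mat" where
  "Aebar N n A Bs Ks Cs Ls \<eta> S \<Lambda> =
     (let F = Fbar N n A Bs Ks Cs Ls; SI = kron S (1\<^sub>m n); StI = kron (transpose_mat S) (1\<^sub>m n) in
      four_block_mat (A - hcat n Ls * vcat n Cs) (Hmat N n A Bs Ks Cs Ls * SI)
                     (StI * F * Istack N n) (StI * F * SI - \<eta> \<cdot>\<^sub>m kron \<Lambda> (1\<^sub>m n)))"

definition Wbar :: "nat \<Rightarrow> nat \<Rightarrow> real mat \<Rightarrow> real mat" where
  "Wbar N n S = 1\<^sub>m n @\<^sub>r (kron (transpose_mat S) (1\<^sub>m n) * Istack N n)"

definition Vbar :: "nat \<Rightarrow> nat \<Rightarrow> real mat \<Rightarrow> real mat list \<Rightarrow> real mat" where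
  "Vbar N n S Ls = hcat n Ls @\<^sub>r (kron (transpose_mat S) (1\<^sub>m n) * Jbar N Ls)"

definition LMI_mat :: "nat \<Rightarrow> nat \<Rightarrow> real \<Rightarrow> real \<Rightarrow> real mat \<Rightarrow> real mat \<Rightarrow> real mat
    \<Rightarrow> real mat \<Rightarrow> real mat \<Rightarrow> real mat \<Rightarrow> real mat" where
  "LMI_mat n m \<gamma> \<alpha> M Ae W V Q R =
     four_block_mat
       (four_block_mat ((\<gamma> - 2 * \<alpha>) \<cdot>\<^sub>m M - transpose_mat Ae * M - M * Ae) (- (M * W))
                       (- (transpose_mat W * M)) (\<alpha> \<cdot>\<^sub>m Q))
       (M * V @\<^sub>r 0\<^sub>m n m)
       (append_cols (transpose_mat V * M) (0\<^sub>m m n))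
       (\<alpha> \<cdot>\<^sub>m R)"

end

theory Submission
  imports Defs
begin


lemma sum_split_div: "(\<Sum>l<(N::nat)*n. g l) = (\<Sum>a<N. \<Sum>b<n. g (a*n+b)::real)"
proof (induction N)
  case 0 then show ?case by simp
next
  case (Suc N)
  have "(\<Sum>l<Suc N*n. g l) = (\<Sum>l<N*n. g l) + (\<Sum>b<n. g (N*n+b))"
  proof -
    have "(\<Sum>l<Suc N*n. g l) = sum g {0..<N*n+n}" by (simp add: lessThan_atLeast0 add.commute)
    also have "\<dots> = sum g {0..<N*n} + sum g {N*n..<N*n+n}"
      by (rule sum.atLeastLessThan_concat[symmetric], auto)
    also have "sum g {N*n..<N*n+n} = (\<Sum>b<n. g (N*n+b))"
      using sum.shift_bounds_nat_ivl[of g 0 "N*n" n] by (simp add: lessThan_atLeast0 add.commute)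
    finally show ?thesis by (simp add: lessThan_atLeast0)
  qed
  then show ?case using Suc by simp
qed

lemma mult_entry:
  assumes "i < dim_row A" "j < dim_col B" "dim_col A = k" "dim_row B = k"
  shows "(A * B) $$ (i,j) = (\<Sum>l<k. A $$ (i,l) * B $$ (l,j))"
  using assms by (simp add: scalar_prod_def lessThan_atLeast0)

lemma append_cols_four:
  assumes "dim_row B = dim_row A" shows "append_cols A B = four_block_mat A B (0\<^sub>m 0 (dim_col A)) (0\<^sub>m 0 (dim_col B))"
  using assms by (rule_tac eq_matI, auto simp: append_cols_def append_rows_def)

lemma append_cols_carrier[simp,intro]:
  "A \<in> carrier_mat r c1 \<Longrightarrow> B \<in> carrier_mat r c2 \<Longrightarrow> append_cols A B \<in> carrier_mat r (c1+c2)"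
  by (subst append_cols_four, auto)

lemma four_zero_dims: "Y \<in> carrier_mat r c \<Longrightarrow> B \<in> carrier_mat r 0 \<Longrightarrow> C \<in> carrier_mat 0 c
   \<Longrightarrow> D \<in> carrier_mat 0 0 \<Longrightarrow> four_block_mat Y B C D = Y"
  by (rule eq_matI, auto)

lemma ac_ar_mult:
  assumes "A \<in> carrier_mat r k1" "B \<in> carrier_mat r k2" "C \<in> carrier_mat k1 c" "D \<in> carrier_mat k2 c"
  shows "append_cols A B * (C @\<^sub>r D) = A * C + B * D"
proof -
  have e1: "append_cols A B = four_block_mat A B (0\<^sub>m 0 k1) (0\<^sub>m 0 k2)"
    using assms by (subst append_cols_four, auto)
  have e2: "C @\<^sub>r D = four_block_mat C (0\<^sub>m k1 0) D (0\<^sub>m k2 0)"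
    using assms by (auto simp: append_rows_def)
  have "append_cols A B * (C @\<^sub>r D) = four_block_mat (A * C + B * D) (A * 0\<^sub>m k1 0 + B * 0\<^sub>m k2 0)
    (0\<^sub>m 0 k1 * C + 0\<^sub>m 0 k2 * D) (0\<^sub>m 0 k1 * 0\<^sub>m k1 0 + 0\<^sub>m 0 k2 * 0\<^sub>m k2 0)"
    unfolding e1 e2 by (rule mult_four_block_mat) (use assms in auto)
  also have "\<dots> = A * C + B * D" using assms by (intro four_zero_dims[of _ r c], auto)
  finally show ?thesis .
qed

lemma ar_mult:
  assumes "C \<in> carrier_mat k1 r" "D \<in> carrier_mat k2 r" "Y \<in> carrier_mat r c"
  shows "(C @\<^sub>r D) * Y = (C * Y) @\<^sub>r (D * Y)"
proof -
  have e2: "C @\<^sub>r D = four_block_mat C (0\<^sub>m k1 0) D (0\<^sub>m k2 0)"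
    using assms by (auto simp: append_rows_def)
  have "(C @\<^sub>r D) * four_block_mat Y (0\<^sub>m r 0) (0\<^sub>m 0 c) (0\<^sub>m 0 0) = four_block_mat (C * Y + 0\<^sub>m k1 0 * 0\<^sub>m 0 c) (C * 0\<^sub>m r 0 + 0\<^sub>m k1 0 * 0\<^sub>m 0 0)
    (D * Y + 0\<^sub>m k2 0 * 0\<^sub>m 0 c) (D * 0\<^sub>m r 0 + 0\<^sub>m k2 0 * 0\<^sub>m 0 0)"
    unfolding e2 by (rule mult_four_block_mat) (use assms in auto)
  moreover have "four_block_mat Y (0\<^sub>m r 0) (0\<^sub>m 0 c) (0\<^sub>m 0 0) = Y" using assms by (intro four_zero_dims, auto)
  ultimately show ?thesis using assms unfolding append_rows_def
    by (auto intro!: cong_four_block_mat)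
qed

lemma ac_mult:
  assumes "A \<in> carrier_mat r k1" "B \<in> carrier_mat r k2" "Y \<in> carrier_mat c r"
  shows "Y * append_cols A B = append_cols (Y * A) (Y * B)"
proof -
  have e1: "append_cols A B = four_block_mat A B (0\<^sub>m 0 k1) (0\<^sub>m 0 k2)"
    using assms by (subst append_cols_four, auto)
  have e3: "append_cols (Y*A) (Y*B) = four_block_mat (Y*A) (Y*B) (0\<^sub>m 0 k1) (0\<^sub>m 0 k2)"
    using assms by (subst append_cols_four, auto)
  have "four_block_mat Y (0\<^sub>m c 0) (0\<^sub>m 0 r) (0\<^sub>m 0 0) * append_cols A B = four_block_mat (Y * A + 0\<^sub>m c 0 * 0\<^sub>m 0 k1) (Y * B + 0\<^sub>m c 0 * 0\<^sub>m 0 k2)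
    (0\<^sub>m 0 r * A + 0\<^sub>m 0 0 * 0\<^sub>m 0 k1) (0\<^sub>m 0 r * B + 0\<^sub>m 0 0 * 0\<^sub>m 0 k2)"
    unfolding e1 by (rule mult_four_block_mat) (use assms in auto)
  moreover have "four_block_mat Y (0\<^sub>m c 0) (0\<^sub>m 0 r) (0\<^sub>m 0 0) = Y" using assms by (intro four_zero_dims, auto)
  ultimately show ?thesis using assms unfolding e3
    by (auto intro!: cong_four_block_mat)
qed

lemma ar_mat_ac:
  assumes "C \<in> carrier_mat k1 r" "D \<in> carrier_mat k2 r" "X \<in> carrier_mat r r'"
    "A \<in> carrier_mat r' c1" "B \<in> carrier_mat r' c2"
  shows "(C @\<^sub>r D) * X * append_cols A B = four_block_mat (C * X * A) (C * X * B) (D * X * A) (D * X * B)"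
proof -
  have 1: "(C @\<^sub>r D) * X = (C*X) @\<^sub>r (D*X)" using assms by (intro ar_mult, auto)
  have 2: "((C*X) @\<^sub>r (D*X)) * A = (C*X*A) @\<^sub>r (D*X*A)" using assms by (intro ar_mult, auto)
  have 3: "((C*X) @\<^sub>r (D*X)) * B = (C*X*B) @\<^sub>r (D*X*B)" using assms by (intro ar_mult, auto)
  have "(C @\<^sub>r D) * X * append_cols A B = append_cols ((C @\<^sub>r D) * X * A) ((C @\<^sub>r D) * X * B)"
    using assms by (intro ac_mult, auto)
  also have "\<dots> = append_cols ((C*X*A) @\<^sub>r (D*X*A)) ((C*X*B) @\<^sub>r (D*X*B))"
    unfolding 1 2 3 ..
  also have "\<dots> = four_block_mat (C * X * A) (C * X * B) (D * X * A) (D * X * B)"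
    apply (subst append_cols_four)
     apply (use assms in \<open>simp add: append_rows_def\<close>)
    apply (rule eq_matI) using assms by (auto simp: append_rows_def)
  finally show ?thesis .
qed





lemma kron_I_dims[simp]: "dim_row (kron A (1\<^sub>m n)) = dim_row A * n" "dim_col (kron A (1\<^sub>m n)) = dim_col A * n"
  unfolding kron_def by (simp_all only: dim_row_mat dim_col_mat index_one_mat)

lemma kron_I_carrier[simp,intro]: "A \<in> carrier_mat r c \<Longrightarrow> kron A (1\<^sub>m n) \<in> carrier_mat (r*n) (c*n)"
  unfolding carrier_mat_def by simp

lemma idx_bound: "a < k \<Longrightarrow> b < n \<Longrightarrow> a*n+b < k*(n::nat)"
proof -
  assume "a < k" "b < n"
  then have "Suc a * n \<le> k*n" by (intro mult_le_mono1) simp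
  moreover have "Suc a * n = a * n + n" by simp
  ultimately show ?thesis using \<open>b < n\<close> by linarith
qed
lemma kron_I_index:
  assumes "i < dim_row A * n" "j < dim_col A * n"
  shows "kron A (1\<^sub>m n) $$ (i,j) = A $$ (i div n, j div n) * (if i mod n = j mod n then 1 else 0)"
proof -
  have n: "n > 0" using assms by (cases n, auto)
  have "kron A (1\<^sub>m n) $$ (i,j) = A $$ (i div n, j div n) * 1\<^sub>m n $$ (i mod n, j mod n)"
    unfolding kron_def using assms by (simp only: index_mat dim_row_mat dim_col_mat index_one_mat split)
  also have "1\<^sub>m n $$ (i mod n, j mod n) = (if i mod n = j mod n then 1 else 0)"
    using n by (simp only: index_one_mat mod_less_divisor)
  finally show ?thesis .
qed

lemma divmod_simps: "b < (n::nat) \<Longrightarrow> (a*n+b) div n = a" "b < (n::nat) \<Longrightarrow> (a*n+b) mod n = b"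
  by auto
lemma kron_mult:
  assumes A: "A \<in> carrier_mat r k" and B: "B \<in> carrier_mat k c"
  shows "kron A (1\<^sub>m n) * kron B (1\<^sub>m n) = kron (A * B) (1\<^sub>m n)"
proof (rule eq_matI)
  fix i j assume ij: "i < dim_row (kron (A * B) (1\<^sub>m n))" "j < dim_col (kron (A * B) (1\<^sub>m n))"
  then have i: "i < r * n" and j: "j < c * n" using A B by auto
  have np: "n > 0" using i by (cases n, auto)
  have id: "i div n < r" "j div n < c" using i j np by (auto simp: less_mult_imp_div_less)
  have "(kron A (1\<^sub>m n) * kron B (1\<^sub>m n)) $$ (i,j) = (\<Sum>l<k*n. kron A (1\<^sub>m n) $$ (i,l) * kron B (1\<^sub>m n) $$ (l,j))"
    using A B i j by (intro mult_entry, auto)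
  also have "\<dots> = (\<Sum>a<k. \<Sum>b<n. kron A (1\<^sub>m n) $$ (i,a*n+b) * kron B (1\<^sub>m n) $$ (a*n+b,j))"
    by (rule sum_split_div)
  also have "\<dots> = (\<Sum>a<k. \<Sum>b<n. A $$ (i div n, a) * B $$ (a, j div n) * 
        ((if i mod n = b then 1 else 0) * (if b = j mod n then 1 else 0)))"
  proof (intro sum.cong refl)
    fix a b assume a: "a \<in> {..<k}" and b: "b \<in> {..<n}"
    have "a*n+b < k*n" using a b by (simp add: idx_bound)
    then show "kron A (1\<^sub>m n) $$ (i,a*n+b) * kron B (1\<^sub>m n) $$ (a*n+b,j) = A $$ (i div n, a) * B $$ (a, j div n) * 
        ((if i mod n = b then 1 else 0) * (if b = j mod n then 1 else 0))"
      using A B i j a b by (simp add: kron_I_index divmod_simps)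
  qed
  also have "\<dots> = (\<Sum>a<k. A $$ (i div n, a) * B $$ (a, j div n) * (if i mod n = j mod n then 1 else 0))"
  proof (intro sum.cong refl)
    fix a
    have "(\<Sum>b<n. ((if i mod n = b then 1 else 0) * (if b = j mod n then 1 else 0))::real) 
          = (if i mod n = j mod n then 1 else 0)"
    proof -
      have "(\<Sum>b<n. ((if i mod n = b then 1 else 0) * (if b = j mod n then 1 else 0))::real)
          = (\<Sum>b<n. if b = i mod n then (if i mod n = j mod n then 1 else 0) else 0)"
        by (intro sum.cong refl) auto
      also have "\<dots> = (if i mod n = j mod n then 1 else 0)"
        using np by (subst sum.delta) auto
      finally show ?thesis .
    qed
    then show "(\<Sum>b<n. A $$ (i div n, a) * B $$ (a, j div n) * 
        ((if i mod n = b then 1 else 0) * (if b = j mod n then 1 else 0))) =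
         A $$ (i div n, a) * B $$ (a, j div n) * (if i mod n = j mod n then 1 else 0)"
      by (simp add: sum_distrib_left[symmetric])
  qed
  also have "\<dots> = (A*B) $$ (i div n, j div n) * (if i mod n = j mod n then 1 else 0)"
    using A B id by (subst mult_entry[of _ A _ B k], auto simp: sum_distrib_right)
  also have "\<dots> = kron (A * B) (1\<^sub>m n) $$ (i,j)" using A B i j by (simp add: kron_I_index)
  finally show "(kron A (1\<^sub>m n) * kron B (1\<^sub>m n)) $$ (i,j) = kron (A * B) (1\<^sub>m n) $$ (i,j)" .
qed (use A B in auto)


lemma kron_add:
  assumes A: "A \<in> carrier_mat r c" and B: "B \<in> carrier_mat r c"
  shows "kron A (1\<^sub>m n) + kron B (1\<^sub>m n) = kron (A + B) (1\<^sub>m n)"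
proof (rule eq_matI)
  fix i j assume "i < dim_row (kron (A + B) (1\<^sub>m n))" "j < dim_col (kron (A + B) (1\<^sub>m n))"
  then have i: "i < r * n" and j: "j < c * n" using A B by auto
  have np: "n > 0" using i by (cases n, auto)
  have id: "i div n < r" "j div n < c" using i j np by (auto simp: less_mult_imp_div_less)
  show "(kron A (1\<^sub>m n) + kron B (1\<^sub>m n)) $$ (i,j) = kron (A + B) (1\<^sub>m n) $$ (i,j)"
    using A B i j id by (simp add: kron_I_index algebra_simps)
qed (use A B in auto)

lemma kron_smult:
  "k \<cdot>\<^sub>m kron A (1\<^sub>m n) = kron (k \<cdot>\<^sub>m A) (1\<^sub>m n)"
proof (rule eq_matI)
  fix i j assume "i < dim_row (kron (k \<cdot>\<^sub>m A) (1\<^sub>m n))" "j < dim_col (kron (k \<cdot>\<^sub>m A) (1\<^sub>m n))"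
  then have i: "i < dim_row A * n" and j: "j < dim_col A * n" by auto
  have np: "n > 0" using i by (cases n, auto)
  have id: "i div n < dim_row A" "j div n < dim_col A" using i j np by (auto simp: less_mult_imp_div_less)
  show "(k \<cdot>\<^sub>m kron A (1\<^sub>m n)) $$ (i,j) = kron (k \<cdot>\<^sub>m A) (1\<^sub>m n) $$ (i,j)"
    using i j id by (simp add: kron_I_index)
qed auto

lemma kron_transpose:
  "transpose_mat (kron A (1\<^sub>m n)) = kron (transpose_mat A) (1\<^sub>m n)"
proof (rule eq_matI)
  fix i j assume "i < dim_row (kron (transpose_mat A) (1\<^sub>m n))" "j < dim_col (kron (transpose_mat A) (1\<^sub>m n))"
  then have i: "i < dim_col A * n" and j: "j < dim_row A * n" by auto
  have np: "n > 0" using i by (cases n, auto)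
  have id: "i div n < dim_col A" "j div n < dim_row A" using i j np by (auto simp: less_mult_imp_div_less)
  show "transpose_mat (kron A (1\<^sub>m n)) $$ (i,j) = kron (transpose_mat A) (1\<^sub>m n) $$ (i,j)"
    using i j id by (auto simp add: kron_I_index)
qed auto

lemma div_mod_eq_iff: "(i::nat) = j \<longleftrightarrow> i div n = j div n \<and> i mod n = j mod n"
  by (metis div_mult_mod_eq)

lemma kron_one: "kron (1\<^sub>m k) (1\<^sub>m n) = 1\<^sub>m (k*n)"
proof (rule eq_matI)
  fix i j assume "i < dim_row (1\<^sub>m (k*n))" "j < dim_col (1\<^sub>m (k*n))"
  then have i: "i < k * n" and j: "j < k * n" by auto
  have np: "n > 0" using i by (cases n, auto)
  have id: "i div n < k" "j div n < k" using i j np by (auto simp: less_mult_imp_div_less)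
  show "kron (1\<^sub>m k) (1\<^sub>m n) $$ (i,j) = 1\<^sub>m (k*n) $$ (i,j)"
    using i j id div_mod_eq_iff[of i j n] by (auto simp add: kron_I_index)
qed auto

lemma kron_zero: "kron (0\<^sub>m r c) (1\<^sub>m n) = 0\<^sub>m (r*n) (c*n)"
proof (rule eq_matI)
  fix i j assume "i < dim_row (0\<^sub>m (r*n) (c*n))" "j < dim_col (0\<^sub>m (r*n) (c*n))"
  then have i: "i < r * n" and j: "j < c * n" by auto
  have np: "n > 0" using i by (cases n, auto)
  have id: "i div n < r" "j div n < c" using i j np by (auto simp: less_mult_imp_div_less)
  show "kron (0\<^sub>m r c) (1\<^sub>m n) $$ (i,j) = 0\<^sub>m (r*n) (c*n) $$ (i,j)"
    using i j id by (simp add: kron_I_index)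
qed auto




lemma lap_index: "i < N \<Longrightarrow> j < N \<Longrightarrow> laplacian N E $$ (i,j) = (if i = j then real (card {k. k < N \<and> E i k})
                                     else if E i j then -1 else 0)"
  unfolding laplacian_def by simp

lemma lap_dims[simp]: "laplacian N E \<in> carrier_mat N N" "dim_row (laplacian N E) = N" "dim_col (laplacian N E) = N"
  unfolding laplacian_def by simp_all

lemma sum_indicator_card: "(\<Sum>j<(N::nat). if P j then (1::real) else 0) = real (card {j. j < N \<and> P j})"
proof -
  have "(\<Sum>j<N. if P j then (1::real) else 0) = (\<Sum>j\<in>{j\<in>{..<N}. P j}. 1)"
    by (rule sum.inter_filter[symmetric]) simp
  also have "{j\<in>{..<N}. P j} = {j. j < N \<and> P j}" by auto
  finally show ?thesis by simp
qed

lemma lap_rowsum: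
  assumes "undirected_graph N E" "i < N"
  shows "(\<Sum>j<N. laplacian N E $$ (i,j)) = 0"
proof -
  have "(\<Sum>j<N. laplacian N E $$ (i,j)) = (\<Sum>j<N. (if j = i then real (card {k. k < N \<and> E i k}) else 0)
     - (if E i j then 1 else 0))"
    using assms by (intro sum.cong refl) (auto simp: lap_index undirected_graph_def)
  also have "\<dots> = real (card {k. k < N \<and> E i k}) - real (card {j. j < N \<and> E i j})"
    using assms by (simp add: sum_subtractf sum_indicator_card)
  finally show ?thesis by simp
qed

lemma lap_colsum:
  assumes "undirected_graph N E" "j < N"
  shows "(\<Sum>i<N. laplacian N E $$ (i,j)) = 0"
proof -
  have "(\<Sum>i<N. laplacian N E $$ (i,j)) = (\<Sum>i<N. laplacian N E $$ (j,i))"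
    using assms by (intro sum.cong refl) (auto simp: lap_index undirected_graph_def)
  then show ?thesis using lap_rowsum[OF assms] by simp
qed

lemma lap_one_col:
  assumes "undirected_graph N E"
  shows "laplacian N E * mat N 1 (\<lambda>_. 1) = 0\<^sub>m N 1"
proof (rule eq_matI)
  fix i j assume "i < dim_row (0\<^sub>m N 1)" "j < dim_col (0\<^sub>m N 1)"
  then have ij: "i < N" "j = 0" by auto
  show "(laplacian N E * mat N 1 (\<lambda>_. 1)) $$ (i, j) = 0\<^sub>m N 1 $$ (i, j)"
    using ij lap_rowsum[OF assms ij(1)] by (subst mult_entry[of _ _ _ _ N]) auto
qed auto

lemma lap_one_row:
  assumes "undirected_graph N E"
  shows "mat 1 N (\<lambda>_. 1) * laplacian N E = 0\<^sub>m 1 N"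
proof (rule eq_matI)
  fix i j assume "i < dim_row (0\<^sub>m 1 N)" "j < dim_col (0\<^sub>m 1 N)"
  then have ij: "j < N" "i = 0" by auto
  show "(mat 1 N (\<lambda>_. 1) * laplacian N E) $$ (i, j) = 0\<^sub>m 1 N $$ (i, j)"
    using ij lap_colsum[OF assms ij(1)] by (subst mult_entry[of _ _ _ _ N]) auto
qed auto

lemma ar_ac_mult:
  assumes "C \<in> carrier_mat k1 r" "D \<in> carrier_mat k2 r"
    "A \<in> carrier_mat r c1" "B \<in> carrier_mat r c2"
  shows "(C @\<^sub>r D) * append_cols A B = four_block_mat (C * A) (C * B) (D * A) (D * B)"
proof -
  have "C @\<^sub>r D \<in> carrier_mat (k1+k2) r" using assms by auto
  moreover have "C * 1\<^sub>m r = C" "D * 1\<^sub>m r = D" using assms by auto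
  ultimately show ?thesis using ar_mat_ac[OF assms(1,2) one_carrier_mat[of r] assms(3,4)] by simp
qed

lemma S_complete:
  fixes S :: "real mat"
  assumes N1: "N \<ge> 1" and S_dim: "S \<in> carrier_mat N (N - 1)"
    and S_orth1: "mat 1 N (\<lambda>_. 1) * S = 0\<^sub>m 1 (N - 1)"
    and S_orthn: "transpose_mat S * S = 1\<^sub>m (N - 1)"
  shows "mat N 1 (\<lambda>_. 1) * ((1 / real N) \<cdot>\<^sub>m mat 1 N (\<lambda>_. 1)) + S * transpose_mat S = 1\<^sub>m N"
proof -
  define oc :: "real mat" where "oc = mat N 1 (\<lambda>_. 1)"
  define orow :: "real mat" where "orow = mat 1 N (\<lambda>_. 1)"
  have oc: "oc \<in> carrier_mat N 1" and orow: "orow \<in> carrier_mat 1 N" unfolding oc_def orow_def by auto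
  have NN: "1 + (N - 1) = N" using N1 by simp
  have U: "append_cols oc S \<in> carrier_mat N N" using append_cols_carrier[OF oc S_dim] NN by simp
  have V: "((1 / real N) \<cdot>\<^sub>m orow) @\<^sub>r transpose_mat S \<in> carrier_mat N N"
    using carrier_append_rows[of "(1 / real N) \<cdot>\<^sub>m orow" 1 N "transpose_mat S" "N - 1"] orow S_dim NN by simp
  have b1: "((1 / real N) \<cdot>\<^sub>m orow) * oc = 1\<^sub>m 1"
  proof (rule eq_matI)
    fix i j assume "i < dim_row (1\<^sub>m 1)" "j < dim_col (1\<^sub>m (1::nat))"
    then have "i = 0" "j = 0" by auto
    then show "((1 / real N) \<cdot>\<^sub>m orow * oc) $$ (i, j) = 1\<^sub>m 1 $$ (i, j)"
      using N1 oc orow by (subst mult_entry[of _ _ _ _ N]) (auto simp: oc_def orow_def)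
  qed (use oc orow in auto)
  have b2: "((1 / real N) \<cdot>\<^sub>m orow) * S = 0\<^sub>m 1 (N - 1)"
    using S_orth1 orow S_dim unfolding orow_def by (subst mult_smult_assoc_mat[of _ 1 N]) auto
  have b3: "transpose_mat S * oc = 0\<^sub>m (N - 1) 1"
  proof -
    have "transpose_mat orow = oc" unfolding oc_def orow_def by (rule eq_matI) auto
    then have "transpose_mat S * oc = transpose_mat (orow * S)"
      using transpose_mult[OF orow S_dim] by simp
    then show ?thesis using S_orth1 by (simp add: orow_def)
  qed
  have "(((1 / real N) \<cdot>\<^sub>m orow) @\<^sub>r transpose_mat S) * append_cols oc S = 
     four_block_mat (1\<^sub>m 1) (0\<^sub>m 1 (N - 1)) (0\<^sub>m (N - 1) 1) (1\<^sub>m (N - 1))"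
    using ar_ac_mult[of _ 1 N "transpose_mat S" "N - 1" oc 1 S "N - 1"] orow oc S_dim b1 b2 b3 S_orthn by simp
  also have "\<dots> = 1\<^sub>m N" using NN by simp
  finally have "append_cols oc S * (((1 / real N) \<cdot>\<^sub>m orow) @\<^sub>r transpose_mat S) = 1\<^sub>m N"
    using mat_mult_left_right_inverse[OF V U] by simp
  moreover have "append_cols oc S * (((1 / real N) \<cdot>\<^sub>m orow) @\<^sub>r transpose_mat S) =
     oc * ((1 / real N) \<cdot>\<^sub>m orow) + S * transpose_mat S"
    using ac_ar_mult[of oc N 1 S "N - 1" "(1 / real N) \<cdot>\<^sub>m orow" N "transpose_mat S"] oc orow S_dim by simp
  ultimately show ?thesis unfolding oc_def orow_def by simp
qed





lemma Istack_dims[simp]: "Istack N n \<in> carrier_mat (N*n) n"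
  "dim_row (Istack N n) = N*n" "dim_col (Istack N n) = n"
  unfolding Istack_def carrier_mat_def by auto

lemma Istack_Suc: "Istack (Suc k) n = 1\<^sub>m n @\<^sub>r Istack k n"
proof (rule eq_matI)
  fix l a assume "l < dim_row (1\<^sub>m n @\<^sub>r Istack k n)" "a < dim_col (1\<^sub>m n @\<^sub>r Istack k n)"
  then have l: "l < n + k * n" and a: "a < n" by (auto simp: append_rows_def)
  have np: "n > 0" using a by auto
  have "Istack (Suc k) n $$ (l,a) = (if l mod n = a then 1 else 0)"
    unfolding Istack_def using l a np
    by (subst kron_I_index) (auto simp: less_mult_imp_div_less)
  moreover have "(1\<^sub>m n @\<^sub>r Istack k n) $$ (l,a) = (if l mod n = a then 1 else 0)"
  proof (cases "l < n")
    case True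
    then show ?thesis using a by (simp add: append_rows_def)
  next
    case False
    then have l2: "l - n < k * n" using l by auto
    have "(1\<^sub>m n @\<^sub>r Istack k n) $$ (l,a) = Istack k n $$ (l - n, a)"
      using False l a by (simp add: append_rows_def)
    also have "\<dots> = (if (l - n) mod n = a then 1 else 0)"
      unfolding Istack_def using l2 a np
      by (subst kron_I_index) (auto simp: less_mult_imp_div_less)
    also have "(l - n) mod n = l mod n" using False by (simp add: le_mod_geq)
    finally show ?thesis .
  qed
  ultimately show "Istack (Suc k) n $$ (l,a) = (1\<^sub>m n @\<^sub>r Istack k n) $$ (l,a)" by simp
qed (auto simp: append_rows_def)

lemma IsT_Suc: "transpose_mat (Istack (Suc k) n) = append_cols (1\<^sub>m n) (transpose_mat (Istack k n))"
  unfolding Istack_Suc append_cols_def by simp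

lemma IsT_diag:
  assumes "\<forall>L\<in>set Ls. dim_row L = n"
  shows "diag_block_mat Ls \<in> carrier_mat (length Ls * n) (sum_list (map dim_col Ls)) \<and>
         hcat n Ls \<in> carrier_mat n (sum_list (map dim_col Ls)) \<and>
         transpose_mat (Istack (length Ls) n) * diag_block_mat Ls = hcat n Ls"
  using assms
proof (induction Ls)
  case Nil
  then show ?case by (auto simp: hcat_def intro!: eq_matI)
next
  case (Cons L Ls)
  define D where "D = diag_block_mat Ls"
  define T where "T = transpose_mat (Istack (length Ls) n)"
  define c where "c = sum_list (map dim_col Ls)"
  have IH: "D \<in> carrier_mat (length Ls * n) c" "hcat n Ls \<in> carrier_mat n c" "T * D = hcat n Ls"
    using Cons unfolding D_def T_def c_def by auto
  define l where "l = dim_col L"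
  have L: "L \<in> carrier_mat n l" using Cons unfolding l_def by auto
  have T: "T \<in> carrier_mat n (length Ls * n)" unfolding T_def by auto
  have dg: "diag_block_mat (L # Ls) = four_block_mat L (0\<^sub>m n c) (0\<^sub>m (length Ls * n) (l)) D"
  proof -
    have "diag_block_mat (L # Ls) = four_block_mat L (0\<^sub>m (dim_row L) (dim_col D)) (0\<^sub>m (dim_row D) (l)) D"
      unfolding D_def l_def by (simp only: diag_block_mat.simps Let_def)
    moreover have "dim_row L = n" "dim_col D = c" "dim_row D = length Ls * n" using IH L by auto
    ultimately show ?thesis by simp
  qed
  have hc: "hcat n (L # Ls) = append_cols L (hcat n Ls)" by (simp add: hcat_def)
  have e1: "length (L#Ls) * n = n + length Ls * n" by simp
  have e2: "sum_list (map dim_col (L # Ls)) = l + c" by (simp add: c_def l_def)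
  have c1: "diag_block_mat (L # Ls) \<in> carrier_mat (length (L # Ls) * n) (sum_list (map dim_col (L # Ls)))"
    unfolding dg e1 e2 using four_block_carrier_mat[OF L IH(1)] .
  have c2: "hcat n (L # Ls) \<in> carrier_mat n (sum_list (map dim_col (L # Ls)))"
    unfolding hc e2 using append_cols_carrier[OF L IH(2)] .
  have "transpose_mat (Istack (length (L # Ls)) n) * diag_block_mat (L # Ls)
     = four_block_mat (1\<^sub>m n) T (0\<^sub>m 0 n) (0\<^sub>m 0 (length Ls * n)) *
       four_block_mat L (0\<^sub>m n c) (0\<^sub>m (length Ls * n) (l)) D"
  proof -
    have "transpose_mat (Istack (length (L # Ls)) n) = append_cols (1\<^sub>m n) T"
      unfolding T_def by (simp only: length_Cons IsT_Suc)
    also have "\<dots> = four_block_mat (1\<^sub>m n) T (0\<^sub>m 0 n) (0\<^sub>m 0 (length Ls * n))"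
      using T by (subst append_cols_four) auto
    finally show ?thesis unfolding dg by simp
  qed
  also have "\<dots> = four_block_mat (1\<^sub>m n * L + T * 0\<^sub>m (length Ls * n) (l)) (1\<^sub>m n * 0\<^sub>m n c + T * D)
    (0\<^sub>m 0 n * L + 0\<^sub>m 0 (length Ls * n) * 0\<^sub>m (length Ls * n) (l))
    (0\<^sub>m 0 n * 0\<^sub>m n c + 0\<^sub>m 0 (length Ls * n) * D)"
    by (rule mult_four_block_mat[OF one_carrier_mat T zero_carrier_mat zero_carrier_mat L zero_carrier_mat zero_carrier_mat IH(1)])
  also have "\<dots> = four_block_mat L (hcat n Ls) (0\<^sub>m 0 (l)) (0\<^sub>m 0 c)"
  proof (intro cong_four_block_mat)
    show "1\<^sub>m n * L + T * 0\<^sub>m (length Ls * n) (l) = L" using T L by simp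
    show "1\<^sub>m n * 0\<^sub>m n c + T * D = hcat n Ls" using T IH by simp
    show "0\<^sub>m 0 n * L + 0\<^sub>m 0 (length Ls * n) * 0\<^sub>m (length Ls * n) (l) = 0\<^sub>m 0 (l)" using L by simp
    show "0\<^sub>m 0 n * 0\<^sub>m n c + 0\<^sub>m 0 (length Ls * n) * D = 0\<^sub>m 0 c" using IH by simp
  qed
  also have "\<dots> = hcat n (L # Ls)" unfolding hc using IH L by (subst append_cols_four[of "hcat n Ls" L]) simp_all
  finally show ?case using c1 c2 by (intro conjI)
qed





lemma hcat_vcat:
  assumes "length Cs = length Ls" "\<forall>i<length Ls. Ls!i \<in> carrier_mat n (k i) \<and> Cs!i \<in> carrier_mat (k i) n"
  shows "hcat n Ls \<in> carrier_mat n (\<Sum>i<length Ls. k i) \<and> vcat n Cs \<in> carrier_mat (\<Sum>i<length Ls. k i) n \<and>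
    (\<forall>a<n. \<forall>b<n. (hcat n Ls * vcat n Cs) $$ (a,b) = (\<Sum>i<length Ls. (Ls!i * Cs!i) $$ (a,b)))"
  using assms
proof (induction Ls arbitrary: Cs k)
  case Nil
  then show ?case by (auto simp: hcat_def vcat_def)
next
  case (Cons L Ls Cs k)
  obtain C Cs' where Cs: "Cs = C # Cs'" using Cons(2) by (cases Cs) auto
  define k' where "k' = (\<lambda>i. k (Suc i))"
  have a2: "\<forall>i<length Ls. Ls!i \<in> carrier_mat n (k' i) \<and> Cs'!i \<in> carrier_mat (k' i) n"
    using Cons(3) Cs unfolding k'_def by auto
  have IH: "hcat n Ls \<in> carrier_mat n (\<Sum>i<length Ls. k' i)" "vcat n Cs' \<in> carrier_mat (\<Sum>i<length Ls. k' i) n"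
    "\<forall>a<n. \<forall>b<n. (hcat n Ls * vcat n Cs') $$ (a,b) = (\<Sum>i<length Ls. (Ls!i * Cs'!i) $$ (a,b))"
    using Cons(1)[OF _ a2] Cons(2) Cs by auto
  define k0 where "k0 = k 0"
  have L: "L \<in> carrier_mat n k0" and C: "C \<in> carrier_mat k0 n" using Cons(3) Cs unfolding k0_def by auto
  have hc: "hcat n (L # Ls) = append_cols L (hcat n Ls)" by (simp add: hcat_def)
  have vc: "vcat n (C # Cs') = C @\<^sub>r vcat n Cs'" by (simp add: vcat_def)
  have sk: "(\<Sum>i<length (L#Ls). k i) = k0 + (\<Sum>i<length Ls. k' i)"
    unfolding k0_def k'_def by (simp only: length_Cons sum.lessThan_Suc_shift)
  have prod: "hcat n (L # Ls) * vcat n Cs = L * C + hcat n Ls * vcat n Cs'"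
    unfolding hc Cs vc by (rule ac_ar_mult[OF L IH(1) C IH(2)])
  show ?case
  proof (intro conjI allI impI)
    show "hcat n (L # Ls) \<in> carrier_mat n (\<Sum>i<length (L # Ls). k i)"
      unfolding hc sk using append_cols_carrier[OF L IH(1)] .
    show "vcat n Cs \<in> carrier_mat (\<Sum>i<length (L # Ls). k i) n"
      unfolding Cs vc sk using carrier_append_rows[OF C IH(2)] .
    fix a b assume ab: "a < n" "b < n"
    have "(hcat n (L # Ls) * vcat n Cs) $$ (a,b) = (L * C) $$ (a,b) + (hcat n Ls * vcat n Cs') $$ (a,b)"
      unfolding prod using ab L C IH(1,2) by simp
    also have "\<dots> = (\<Sum>i<length (L#Ls). ((L#Ls)!i * Cs!i) $$ (a,b))"
      using IH(3) ab Cs by (simp only: length_Cons sum.lessThan_Suc_shift nth_Cons_0 nth_Cons_Suc)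
    finally show "(hcat n (L # Ls) * vcat n Cs) $$ (a,b) = (\<Sum>i<length (L#Ls). ((L#Ls)!i * Cs!i) $$ (a,b))" .
  qed
qed

lemma msum_prop:
  assumes "\<forall>M\<in>set Ms. M \<in> carrier_mat n n"
  shows "msum n Ms \<in> carrier_mat n n \<and> (\<forall>a<n. \<forall>b<n. msum n Ms $$ (a,b) = sum_list (map (\<lambda>M. M $$ (a,b)) Ms))"
  using assms
proof (induction Ms)
  case Nil
  then show ?case by (simp add: msum_def)
next
  case (Cons M Ms)
  have IH: "msum n Ms \<in> carrier_mat n n" "\<forall>a<n. \<forall>b<n. msum n Ms $$ (a,b) = sum_list (map (\<lambda>M. M $$ (a,b)) Ms)"
    using Cons by auto
  have e: "msum n (M # Ms) = M + msum n Ms" by (simp add: msum_def)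
  have M: "M \<in> carrier_mat n n" using Cons by auto
  show ?case unfolding e using IH M by auto
qed


definition sysok :: "nat \<Rightarrow> nat \<Rightarrow> (nat \<Rightarrow> nat) \<Rightarrow> (nat \<Rightarrow> nat) \<Rightarrow> real mat \<Rightarrow> real mat list \<Rightarrow> real mat list \<Rightarrow> real mat list \<Rightarrow> real mat list \<Rightarrow> bool" where
  "sysok N n p md A Bs Ks Cs Ls \<longleftrightarrow> A \<in> carrier_mat n n \<and> length Bs = N \<and> length Ks = N \<and> length Cs = N \<and> length Ls = N \<and>
    (\<forall>i<N. Bs ! i \<in> carrier_mat n (p i)) \<and> (\<forall>i<N. Ks ! i \<in> carrier_mat (p i) n) \<and>
    (\<forall>i<N. Cs ! i \<in> carrier_mat (md i) n) \<and> (\<forall>i<N. Ls ! i \<in> carrier_mat n (md i))"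

lemma sysok_bk: "sysok N n p md A Bs Ks Cs Ls \<Longrightarrow> j < N \<Longrightarrow> Bs ! j * Ks ! j \<in> carrier_mat n n"
  unfolding sysok_def by (meson mult_carrier_mat)

lemma sysok_lc: "sysok N n p md A Bs Ks Cs Ls \<Longrightarrow> j < N \<Longrightarrow> Ls ! j * Cs ! j \<in> carrier_mat n n"
  unfolding sysok_def by (meson mult_carrier_mat)

lemma Abk_prop:
  assumes "sysok N n p md A Bs Ks Cs Ls"
  shows "Abk n A Bs Ks \<in> carrier_mat n n \<and>
    (\<forall>a<n. \<forall>b<n. Abk n A Bs Ks $$ (a,b) = A $$ (a,b) + (\<Sum>j<N. (Bs ! j * Ks ! j) $$ (a,b)))"
proof -
  have len: "length Bs = N" and A: "A \<in> carrier_mat n n" using assms unfolding sysok_def by auto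
  have "\<forall>M\<in>set (map (\<lambda>i. Bs ! i * Ks ! i) [0..<length Bs]). M \<in> carrier_mat n n"
    using sysok_bk[OF assms] len by auto
  note ms = msum_prop[OF this]
  have sl: "sum_list (map (\<lambda>M. M $$ (a,b)) (map (\<lambda>i. Bs ! i * Ks ! i) [0..<length Bs])) = 
     (\<Sum>j<N. (Bs ! j * Ks ! j) $$ (a,b))" for a b
    using len by (simp add: interv_sum_list_conv_sum_set_nat lessThan_atLeast0 comp_def)
  show ?thesis unfolding Abk_def using ms A sl by auto
qed

lemma Istack_index: "l < N * n \<Longrightarrow> a < n \<Longrightarrow> Istack N n $$ (l,a) = (if l mod n = a then 1 else 0)"
  unfolding Istack_def by (subst kron_I_index) (auto simp: less_mult_imp_div_less)

lemma Fbar_dims[simp]: "Fbar N n A Bs Ks Cs Ls \<in> carrier_mat (N*n) (N*n)"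
  "dim_row (Fbar N n A Bs Ks Cs Ls) = N*n" "dim_col (Fbar N n A Bs Ks Cs Ls) = N*n"
  unfolding Fbar_def by auto

lemma Hmat_dims[simp]: "Hmat N n A Bs Ks Cs Ls \<in> carrier_mat n (N*n)"
  "dim_row (Hmat N n A Bs Ks Cs Ls) = n" "dim_col (Hmat N n A Bs Ks Cs Ls) = N*n"
  unfolding Hmat_def by auto

lemma Fbar_entry:
  assumes ok: "sysok N n p md A Bs Ks Cs Ls" and ij: "i < N" "j < N" and ab: "a < n" "b < n"
  shows "Fbar N n A Bs Ks Cs Ls $$ (i*n+a, j*n+b) = (if i = j then Abk n A Bs Ks $$ (a,b)
     - real N * (Ls ! i * Cs ! i) $$ (a,b) - (Bs ! i * Ks ! i) $$ (a,b) else - (Bs ! j * Ks ! j) $$ (a,b))"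
proof -
  have r: "i*n+a < N*n" "j*n+b < N*n" using ij ab by (auto intro: idx_bound)
  have "Fbar N n A Bs Ks Cs Ls $$ (i*n+a, j*n+b) = (if i = j then Abk n A Bs Ks - real N \<cdot>\<^sub>m (Ls ! i * Cs ! i) - Bs ! i * Ks ! i
      else - (Bs ! j * Ks ! j)) $$ (a, b)"
    unfolding Fbar_def using r ab by (simp add: Let_def divmod_simps)
  also have "\<dots> = (if i = j then Abk n A Bs Ks $$ (a,b)
     - real N * (Ls ! i * Cs ! i) $$ (a,b) - (Bs ! i * Ks ! i) $$ (a,b) else - (Bs ! j * Ks ! j) $$ (a,b))"
    using carrier_matD[OF conjunct1[OF Abk_prop[OF ok]]] carrier_matD[OF sysok_bk[OF ok ij(1)]] 
      carrier_matD[OF sysok_bk[OF ok ij(2)]] carrier_matD[OF sysok_lc[OF ok ij(1)]] carrier_matD[OF sysok_lc[OF ok ij(2)]] ab 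
    by (simp del: index_mult_mat dim_row_mat dim_col_mat)
  finally show ?thesis .
qed

lemma Hmat_entry:
  assumes ok: "sysok N n p md A Bs Ks Cs Ls" and j: "j < N" and ab: "a < n" "b < n"
  shows "Hmat N n A Bs Ks Cs Ls $$ (a, j*n+b) = Abk n A Bs Ks $$ (a,b) / real N
     - (Bs ! j * Ks ! j) $$ (a,b) - (Ls ! j * Cs ! j) $$ (a,b)"
proof -
  have r: "j*n+b < N*n" using j ab by (auto intro: idx_bound)
  have "Hmat N n A Bs Ks Cs Ls $$ (a, j*n+b) = ((1 / real N) \<cdot>\<^sub>m Abk n A Bs Ks - Bs ! j * Ks ! j - Ls ! j * Cs ! j) $$ (a, b)"
    unfolding Hmat_def using r ab by (simp add: Let_def divmod_simps)
  also have "\<dots> = Abk n A Bs Ks $$ (a,b) / real N - (Bs ! j * Ks ! j) $$ (a,b) - (Ls ! j * Cs ! j) $$ (a,b)"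
    using carrier_matD[OF conjunct1[OF Abk_prop[OF ok]]] carrier_matD[OF sysok_bk[OF ok j]] 
      carrier_matD[OF sysok_lc[OF ok j]] ab 
    by (simp del: index_mult_mat dim_row_mat dim_col_mat)
  finally show ?thesis .
qed





lemma sum_if_eq: "j < (N::nat) \<Longrightarrow> (\<Sum>i<N. if i = j then X else Y) = X - Y + real N * (Y::real)"
proof -
  assume j: "j < N"
  have "(\<Sum>i<N. if i = j then X else Y) = (\<Sum>i<N. Y + (if i = j then X - Y else 0))"
    by (intro sum.cong refl) auto
  also have "\<dots> = real N * Y + (X - Y)" using j by (simp add: sum.distrib)
  finally show ?thesis by simp
qed

lemma idx_decomp: "c < N * n \<Longrightarrow> c = (c div n) * n + c mod (n::nat) \<and> c div n < N \<and> c mod n < n"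
  by (metis div_mult_mod_eq less_mult_imp_div_less mod_less_divisor mult_0_right nat_neq_iff not_less0 mult.commute)

lemma IsT_F:
  assumes ok: "sysok N n p md A Bs Ks Cs Ls"
  shows "transpose_mat (Istack N n) * Fbar N n A Bs Ks Cs Ls = real N \<cdot>\<^sub>m Hmat N n A Bs Ks Cs Ls"
proof (rule eq_matI)
  fix a c assume "a < dim_row (real N \<cdot>\<^sub>m Hmat N n A Bs Ks Cs Ls)" "c < dim_col (real N \<cdot>\<^sub>m Hmat N n A Bs Ks Cs Ls)"
  then have a: "a < n" and c: "c < N * n" by auto
  define j where "j = c div n"
  define b where "b = c mod n"
  have cjb: "c = j * n + b" "j < N" "b < n" using idx_decomp[OF c] unfolding j_def b_def by auto
  have "(transpose_mat (Istack N n) * Fbar N n A Bs Ks Cs Ls) $$ (a, c) = 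
     (\<Sum>l<N*n. transpose_mat (Istack N n) $$ (a,l) * Fbar N n A Bs Ks Cs Ls $$ (l,c))"
    using a c by (intro mult_entry) auto
  also have "\<dots> = (\<Sum>i<N. \<Sum>b'<n. transpose_mat (Istack N n) $$ (a,i*n+b') * Fbar N n A Bs Ks Cs Ls $$ (i*n+b',c))"
    by (rule sum_split_div)
  also have "\<dots> = (\<Sum>i<N. \<Sum>b'<n. if b' = a then Fbar N n A Bs Ks Cs Ls $$ (i*n+a,c) else 0)"
  proof (intro sum.cong refl)
    fix i b' assume "i \<in> {..<N}" "b' \<in> {..<n}"
    then have ib: "i < N" "b' < n" "i*n+b' < N*n" by (auto intro: idx_bound)
    then show "transpose_mat (Istack N n) $$ (a,i*n+b') * Fbar N n A Bs Ks Cs Ls $$ (i*n+b',c) =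
       (if b' = a then Fbar N n A Bs Ks Cs Ls $$ (i*n+a,c) else 0)"
      using a by (simp add: Istack_index divmod_simps)
  qed
  also have "\<dots> = (\<Sum>i<N. Fbar N n A Bs Ks Cs Ls $$ (i*n+a,j*n+b))"
    using a cjb by (simp add: sum.delta)
  also have "\<dots> = (\<Sum>i<N. if i = j then Abk n A Bs Ks $$ (a,b)
     - real N * (Ls ! j * Cs ! j) $$ (a,b) - (Bs ! j * Ks ! j) $$ (a,b) else - (Bs ! j * Ks ! j) $$ (a,b))"
    using a cjb by (intro sum.cong refl) (auto simp: Fbar_entry[OF ok])
  also have "\<dots> = real N * (Abk n A Bs Ks $$ (a,b) / real N - (Bs ! j * Ks ! j) $$ (a,b) - (Ls ! j * Cs ! j) $$ (a,b))"
    using cjb by (subst sum_if_eq) (auto simp: algebra_simps)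
  also have "\<dots> = (real N \<cdot>\<^sub>m Hmat N n A Bs Ks Cs Ls) $$ (a, c)"
    using a c cjb by (simp add: Hmat_entry[OF ok])
  finally show "(transpose_mat (Istack N n) * Fbar N n A Bs Ks Cs Ls) $$ (a, c) = (real N \<cdot>\<^sub>m Hmat N n A Bs Ks Cs Ls) $$ (a, c)" .
qed auto


lemma H_Is:
  assumes ok: "sysok N n p md A Bs Ks Cs Ls" and N: "N > 0"
  shows "Hmat N n A Bs Ks Cs Ls * Istack N n = A - hcat n Ls * vcat n Cs"
proof -
  have len: "length Ls = N" "length Cs = N" and A: "A \<in> carrier_mat n n" using ok unfolding sysok_def by auto
  have hv: "hcat n Ls \<in> carrier_mat n (\<Sum>i<N. md i) \<and> vcat n Cs \<in> carrier_mat (\<Sum>i<N. md i) n \<and>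
    (\<forall>a<n. \<forall>b<n. (hcat n Ls * vcat n Cs) $$ (a,b) = (\<Sum>i<N. (Ls!i * Cs!i) $$ (a,b)))"
    using hcat_vcat[of Cs Ls n md] ok len unfolding sysok_def by auto
  show ?thesis
  proof (rule eq_matI)
    fix a b assume "a < dim_row (A - hcat n Ls * vcat n Cs)" "b < dim_col (A - hcat n Ls * vcat n Cs)"
    then have a: "a < n" and b: "b < n" using hv by auto
    have "(Hmat N n A Bs Ks Cs Ls * Istack N n) $$ (a, b) = 
       (\<Sum>l<N*n. Hmat N n A Bs Ks Cs Ls $$ (a,l) * Istack N n $$ (l,b))"
      using a b by (intro mult_entry) auto
    also have "\<dots> = (\<Sum>j<N. \<Sum>b'<n. Hmat N n A Bs Ks Cs Ls $$ (a,j*n+b') * Istack N n $$ (j*n+b',b))"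
      by (rule sum_split_div)
    also have "\<dots> = (\<Sum>j<N. \<Sum>b'<n. if b' = b then Hmat N n A Bs Ks Cs Ls $$ (a,j*n+b) else 0)"
    proof (intro sum.cong refl)
      fix j b' assume "j \<in> {..<N}" "b' \<in> {..<n}"
      then have ib: "j < N" "b' < n" "j*n+b' < N*n" by (auto intro: idx_bound)
      then show "Hmat N n A Bs Ks Cs Ls $$ (a,j*n+b') * Istack N n $$ (j*n+b',b) =
         (if b' = b then Hmat N n A Bs Ks Cs Ls $$ (a,j*n+b) else 0)"
        using b by (simp add: Istack_index divmod_simps)
    qed
    also have "\<dots> = (\<Sum>j<N. Hmat N n A Bs Ks Cs Ls $$ (a,j*n+b))"
      using b by (simp add: sum.delta)
    also have "\<dots> = (\<Sum>j<N. Abk n A Bs Ks $$ (a,b) / real N - (Bs ! j * Ks ! j) $$ (a,b) - (Ls ! j * Cs ! j) $$ (a,b))"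
      using a b by (intro sum.cong refl) (auto simp: Hmat_entry[OF ok])
    also have "\<dots> = Abk n A Bs Ks $$ (a,b) - (\<Sum>j<N. (Bs ! j * Ks ! j) $$ (a,b)) - (\<Sum>j<N. (Ls ! j * Cs ! j) $$ (a,b))"
      using N by (simp add: sum_subtractf)
    also have "\<dots> = A $$ (a,b) - (hcat n Ls * vcat n Cs) $$ (a,b)"
      using Abk_prop[OF ok] hv a b by auto
    also have "\<dots> = (A - hcat n Ls * vcat n Cs) $$ (a,b)"
      using A hv a b by auto
    finally show "(Hmat N n A Bs Ks Cs Ls * Istack N n) $$ (a, b) = (A - hcat n Ls * vcat n Cs) $$ (a,b)" .
  qed (use A hv in auto)
qed





lemma oc_orow_T: "transpose_mat (mat N 1 (\<lambda>_. 1)) = (mat 1 N (\<lambda>_. 1) :: real mat)"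
  by (rule eq_matI) auto

lemma IsT_kron: "transpose_mat (Istack N n) = kron (mat 1 N (\<lambda>_. 1)) (1\<^sub>m n)"
  unfolding Istack_def kron_transpose oc_orow_T ..

lemma block_ids:
  fixes S \<Lambda> :: "real mat" and \<eta> :: real
  assumes ok: "sysok N n p md A Bs Ks Cs Ls" and N1: "N \<ge> 1"
    and graph: "undirected_graph N E"
    and S_dim: "S \<in> carrier_mat N (N - 1)"
    and S_orth1: "mat 1 N (\<lambda>_. 1) * S = 0\<^sub>m 1 (N - 1)"
    and S_orthn: "transpose_mat S * S = 1\<^sub>m (N - 1)"
    and S_diag: "transpose_mat S * laplacian N E * S = \<Lambda>"
    and Lam: "\<Lambda> \<in> carrier_mat (N - 1) (N - 1)"
  defines "Einv \<equiv> ((1 / real N) \<cdot>\<^sub>m transpose_mat (Istack N n)) @\<^sub>r kron (transpose_mat S) (1\<^sub>m n)"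
      and "X \<equiv> Fbar N n A Bs Ks Cs Ls - \<eta> \<cdot>\<^sub>m kron (laplacian N E) (1\<^sub>m n)"
  shows "Ebar N n S * Einv = 1\<^sub>m (N*n)"
    "Aebar N n A Bs Ks Cs Ls \<eta> S \<Lambda> = Einv * X * Ebar N n S"
    "Wbar N n S = Einv * Istack N n"
    "Vbar N n S Ls = Einv * Jbar N Ls"
proof -
  define oc :: "real mat" where "oc = mat N 1 (\<lambda>_. 1)"
  define orow :: "real mat" where "orow = mat 1 N (\<lambda>_. 1)"
  define Lap where "Lap = laplacian N E"
  define Is where "Is = Istack N n"
  define IsN where "IsN = (1 / real N) \<cdot>\<^sub>m transpose_mat (Istack N n)"
  define SI where "SI = kron S (1\<^sub>m n)"
  define StI where "StI = kron (transpose_mat S) (1\<^sub>m n)"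
  define F where "F = Fbar N n A Bs Ks Cs Ls"
  define H where "H = Hmat N n A Bs Ks Cs Ls"
  define kL where "kL = kron Lap (1\<^sub>m n)"
  define M where "M = N - 1"
  have NM: "N = Suc M" using N1 unfolding M_def by simp
  have oc: "oc \<in> carrier_mat N 1" and orow: "orow \<in> carrier_mat 1 N" unfolding oc_def orow_def by auto
  have Is: "Is \<in> carrier_mat (N*n) n" unfolding Is_def by simp
  have Is_k: "Is = kron oc (1\<^sub>m n)" unfolding Is_def Istack_def oc_def ..
  have IsN_k: "IsN = kron ((1 / real N) \<cdot>\<^sub>m orow) (1\<^sub>m n)"
    unfolding IsN_def IsT_kron orow_def kron_smult ..
  have IsN: "IsN \<in> carrier_mat n (N*n)" unfolding IsN_k using orow by auto
  have SI: "SI \<in> carrier_mat (N*n) (M*n)" unfolding SI_def M_def using S_dim by auto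
  have StI: "StI \<in> carrier_mat (M*n) (N*n)" unfolding StI_def M_def using S_dim by auto
  have F: "F \<in> carrier_mat (N*n) (N*n)" unfolding F_def by simp
  have H: "H \<in> carrier_mat n (N*n)" unfolding H_def by simp
  have kL: "kL \<in> carrier_mat (N*n) (N*n)" unfolding kL_def Lap_def by auto
  have X: "X = F - \<eta> \<cdot>\<^sub>m kL" unfolding X_def F_def kL_def Lap_def ..
  have Xc: "X \<in> carrier_mat (N*n) (N*n)" unfolding X using F kL by auto
  have Einv: "Einv = IsN @\<^sub>r StI" unfolding Einv_def IsN_def StI_def ..
  have Eb: "Ebar N n S = append_cols Is SI" unfolding Ebar_def Is_def SI_def ..
  have "Ebar N n S * Einv = Is * IsN + SI * StI"
    unfolding Eb Einv by (rule ac_ar_mult[OF Is SI IsN StI])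
  also have "Is * IsN = kron (oc * ((1 / real N) \<cdot>\<^sub>m orow)) (1\<^sub>m n)"
    unfolding Is_k IsN_k using oc orow by (intro kron_mult) auto
  also have "SI * StI = kron (S * transpose_mat S) (1\<^sub>m n)"
    unfolding SI_def StI_def using S_dim by (intro kron_mult) auto
  also have "kron (oc * ((1 / real N) \<cdot>\<^sub>m orow)) (1\<^sub>m n) + kron (S * transpose_mat S) (1\<^sub>m n)
     = kron (oc * ((1 / real N) \<cdot>\<^sub>m orow) + S * transpose_mat S) (1\<^sub>m n)"
    using oc orow S_dim by (intro kron_add[of _ N N]) auto
  also have "oc * ((1 / real N) \<cdot>\<^sub>m orow) + S * transpose_mat S = 1\<^sub>m N"
    unfolding oc_def orow_def by (rule S_complete[OF N1 S_dim S_orth1 S_orthn])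
  finally show "Ebar N n S * Einv = 1\<^sub>m (N*n)" by (simp add: kron_one)
  have IsT_kL: "IsN * kL = 0\<^sub>m n (N*n)"
  proof -
    have "IsN * kL = kron ((1 / real N) \<cdot>\<^sub>m orow * Lap) (1\<^sub>m n)"
      unfolding IsN_k kL_def using orow by (intro kron_mult) (auto simp: Lap_def)
    also have "(1 / real N) \<cdot>\<^sub>m orow * Lap = 0\<^sub>m 1 N"
      using lap_one_row[OF graph] orow unfolding orow_def Lap_def
      by (subst mult_smult_assoc_mat[of _ 1 N]) auto
    finally show ?thesis by (simp add: kron_zero)
  qed
  have kL_Is: "kL * Is = 0\<^sub>m (N*n) n"
  proof -
    have "kL * Is = kron (Lap * oc) (1\<^sub>m n)"
      unfolding Is_k kL_def using oc by (intro kron_mult) (auto simp: Lap_def)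
    also have "Lap * oc = 0\<^sub>m N 1" using lap_one_col[OF graph] unfolding oc_def Lap_def .
    finally show ?thesis by (simp add: kron_zero)
  qed
  have StkLS: "StI * kL * SI = kron \<Lambda> (1\<^sub>m n)"
  proof -
    have "StI * kL = kron (transpose_mat S * Lap) (1\<^sub>m n)"
      unfolding StI_def kL_def using S_dim by (intro kron_mult) (auto simp: Lap_def)
    also have "\<dots> * SI = kron (transpose_mat S * Lap * S) (1\<^sub>m n)"
      unfolding SI_def using S_dim by (intro kron_mult) (auto simp: Lap_def)
    finally show ?thesis using S_diag unfolding Lap_def by simp
  qed
  have IsN_X: "IsN * X = H"
  proof -
    have "IsN * X = IsN * F - IsN * (\<eta> \<cdot>\<^sub>m kL)" unfolding X
      using IsN F kL by (intro mult_minus_distrib_mat) auto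
    also have "IsN * (\<eta> \<cdot>\<^sub>m kL) = \<eta> \<cdot>\<^sub>m (IsN * kL)" using IsN kL by (intro mult_smult_distrib) auto
    also have "IsN * F = (1 / real N) \<cdot>\<^sub>m (transpose_mat (Istack N n) * F)"
      unfolding IsN_def using F by (intro mult_smult_assoc_mat) auto
    also have "transpose_mat (Istack N n) * F = real N \<cdot>\<^sub>m H" unfolding F_def H_def by (rule IsT_F[OF ok])
    finally have "IsN * X = (1 / real N) \<cdot>\<^sub>m (real N \<cdot>\<^sub>m H) - \<eta> \<cdot>\<^sub>m 0\<^sub>m n (N*n)" unfolding IsT_kL .
    also have "\<dots> = H" by (rule eq_matI) (use H N1 in auto)
    finally show ?thesis .
  qed
  have X_Is: "X * Is = F * Is"
  proof -
    have "X * Is = F * Is - (\<eta> \<cdot>\<^sub>m kL) * Is" unfolding X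
      using Is F kL by (intro minus_mult_distrib_mat) auto
    also have "(\<eta> \<cdot>\<^sub>m kL) * Is = \<eta> \<cdot>\<^sub>m (kL * Is)" using Is kL by (intro mult_smult_assoc_mat) auto
    finally show ?thesis unfolding kL_Is using F Is by auto
  qed
  have St_X_S: "StI * X * SI = StI * F * SI - \<eta> \<cdot>\<^sub>m kron \<Lambda> (1\<^sub>m n)"
  proof -
    have "StI * X = StI * F - StI * (\<eta> \<cdot>\<^sub>m kL)" unfolding X
      using StI F kL by (intro mult_minus_distrib_mat) auto
    also have "StI * (\<eta> \<cdot>\<^sub>m kL) = \<eta> \<cdot>\<^sub>m (StI * kL)" using StI kL by (intro mult_smult_distrib) auto
    finally have "StI * X * SI = (StI * F - \<eta> \<cdot>\<^sub>m (StI * kL)) * SI" by simp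
    also have "\<dots> = StI * F * SI - (\<eta> \<cdot>\<^sub>m (StI * kL)) * SI"
      using StI F kL SI by (intro minus_mult_distrib_mat) auto
    also have "(\<eta> \<cdot>\<^sub>m (StI * kL)) * SI = \<eta> \<cdot>\<^sub>m (StI * kL * SI)"
      using StI kL SI by (intro mult_smult_assoc_mat) auto
    finally show ?thesis unfolding StkLS .
  qed
  have AB: "Aebar N n A Bs Ks Cs Ls \<eta> S \<Lambda> = four_block_mat (A - hcat n Ls * vcat n Cs) (H * SI)
                     (StI * F * Is) (StI * F * SI - \<eta> \<cdot>\<^sub>m kron \<Lambda> (1\<^sub>m n))"
    unfolding Aebar_def Let_def F_def H_def SI_def StI_def Is_def ..
  have "Einv * X * Ebar N n S = four_block_mat (IsN * X * Is) (IsN * X * SI) (StI * X * Is) (StI * X * SI)"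
    unfolding Einv Eb by (rule ar_mat_ac[OF IsN StI Xc Is SI])
  also have "IsN * X * Is = A - hcat n Ls * vcat n Cs"
    unfolding IsN_X H_def Is_def using N1 by (intro H_Is[OF ok]) auto
  also have "IsN * X * SI = H * SI" unfolding IsN_X ..
  also have "StI * X * Is = StI * F * Is"
    using StI Xc Is F by (simp add: X_Is)
  also note St_X_S
  finally show "Aebar N n A Bs Ks Cs Ls \<eta> S \<Lambda> = Einv * X * Ebar N n S" unfolding AB ..
  have "Einv * Istack N n = (IsN * Is) @\<^sub>r (StI * Is)"
    unfolding Einv Is_def[symmetric] by (rule ar_mult[OF IsN StI Is])
  also have "IsN * Is = kron (((1 / real N) \<cdot>\<^sub>m orow) * oc) (1\<^sub>m n)"
    unfolding Is_k IsN_k using oc orow by (intro kron_mult) auto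
  also have "((1 / real N) \<cdot>\<^sub>m orow) * oc = 1\<^sub>m 1"
  proof (rule eq_matI)
    fix i j assume "i < dim_row (1\<^sub>m 1)" "j < dim_col (1\<^sub>m (1::nat))"
    then have "i = 0" "j = 0" by auto
    then show "((1 / real N) \<cdot>\<^sub>m orow * oc) $$ (i, j) = 1\<^sub>m 1 $$ (i, j)"
      using N1 oc orow by (subst mult_entry[of _ _ _ _ N]) (auto simp: oc_def orow_def)
  qed (use oc orow in auto)
  finally show "Wbar N n S = Einv * Istack N n" unfolding Wbar_def StI_def Is_def by (simp add: kron_one)
  have lenL: "length Ls = N" using ok unfolding sysok_def by auto
  have Ldim: "\<forall>L\<in>set Ls. dim_row L = n"
  proof
    fix L assume "L \<in> set Ls"
    then obtain i where i: "i < N" "L = Ls ! i" using lenL by (auto simp: in_set_conv_nth)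
    have "Ls ! i \<in> carrier_mat n (md i)" using ok i unfolding sysok_def by auto
    then show "dim_row L = n" using i by auto
  qed
  note ID = IsT_diag[OF Ldim, unfolded lenL]
  define D where "D = diag_block_mat Ls"
  define cc where "cc = sum_list (map dim_col Ls)"
  have D: "D \<in> carrier_mat (N*n) cc" using ID unfolding D_def cc_def by auto
  have J: "Jbar N Ls = real N \<cdot>\<^sub>m D" unfolding Jbar_def D_def ..
  have Jc: "Jbar N Ls \<in> carrier_mat (N*n) cc" unfolding J using D by auto
  have "Einv * Jbar N Ls = (IsN * Jbar N Ls) @\<^sub>r (StI * Jbar N Ls)"
    unfolding Einv by (rule ar_mult[OF IsN StI Jc])
  also have "IsN * Jbar N Ls = hcat n Ls"
  proof -
    have "IsN * Jbar N Ls = real N \<cdot>\<^sub>m (IsN * D)" unfolding J using IsN D by (intro mult_smult_distrib) auto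
    also have "IsN * D = (1 / real N) \<cdot>\<^sub>m (transpose_mat (Istack N n) * D)"
      unfolding IsN_def using D by (intro mult_smult_assoc_mat) auto
    also have "transpose_mat (Istack N n) * D = hcat n Ls" using ID unfolding D_def by auto
    finally have "IsN * Jbar N Ls = real N \<cdot>\<^sub>m ((1 / real N) \<cdot>\<^sub>m hcat n Ls)" .
    also have "\<dots> = hcat n Ls" by (rule eq_matI) (use N1 in auto)
    finally show ?thesis .
  qed
  finally show "Vbar N n S Ls = Einv * Jbar N Ls" unfolding Vbar_def StI_def ..
qed





lemma quad_form_sum: "x \<in> carrier_vec K \<Longrightarrow> P \<in> carrier_mat K K \<Longrightarrow> y \<in> carrier_vec K \<Longrightarrow>
   x \<bullet> (P *\<^sub>v y) = (\<Sum>i<K. x $ i * (\<Sum>j<K. P $$ (i,j) * y $ j))"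
  by (simp add: scalar_prod_def lessThan_atLeast0)

lemma deriv_quad:
  fixes e :: "real \<Rightarrow> real vec"
  assumes e_dim: "\<forall>s. e s \<in> carrier_vec K" and P: "P \<in> carrier_mat K K" and d: "d \<in> carrier_vec K"
    and der: "\<forall>i<K. ((\<lambda>s. e s $ i) has_real_derivative (d $ i)) (at t)"
  shows "((\<lambda>s. e s \<bullet> (P *\<^sub>v e s)) has_real_derivative (d \<bullet> (P *\<^sub>v e t) + e t \<bullet> (P *\<^sub>v d))) (at t)"
proof -
  have f: "(\<lambda>s. e s \<bullet> (P *\<^sub>v e s)) = (\<lambda>s. \<Sum>i<K. e s $ i * (\<Sum>j<K. P $$ (i,j) * e s $ j))"
    using e_dim P by (intro ext quad_form_sum) auto
  have "((\<lambda>s. \<Sum>i<K. e s $ i * (\<Sum>j<K. P $$ (i,j) * e s $ j)) has_real_derivative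
     (\<Sum>i<K. d $ i * (\<Sum>j<K. P $$ (i,j) * e t $ j) + (\<Sum>j<K. P $$ (i,j) * d $ j) * e t $ i)) (at t)"
  proof (rule DERIV_sum)
    fix i assume i: "i \<in> {..<K}"
    have "((\<lambda>s. \<Sum>j<K. P $$ (i,j) * e s $ j) has_real_derivative (\<Sum>j<K. P $$ (i,j) * d $ j)) (at t)"
      using der by (intro DERIV_sum DERIV_cmult) auto
    then show "((\<lambda>s. e s $ i * (\<Sum>j<K. P $$ (i,j) * e s $ j)) has_real_derivative
       d $ i * (\<Sum>j<K. P $$ (i,j) * e t $ j) + (\<Sum>j<K. P $$ (i,j) * d $ j) * e t $ i) (at t)"
      using der i by (intro DERIV_mult) auto
  qed
  moreover have "(\<Sum>i<K. d $ i * (\<Sum>j<K. P $$ (i,j) * e t $ j) + (\<Sum>j<K. P $$ (i,j) * d $ j) * e t $ i)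
     = d \<bullet> (P *\<^sub>v e t) + e t \<bullet> (P *\<^sub>v d)"
  proof -
    have et: "e t \<in> carrier_vec K" using e_dim by auto
    show ?thesis unfolding quad_form_sum[OF d P et] quad_form_sum[OF et P d] sum.distrib
      by (simp add: ac_simps)
  qed
  ultimately show ?thesis unfolding f by simp
qed


lemma smult_mv: "(A::real mat) \<in> carrier_mat nr nc \<Longrightarrow> x \<in> carrier_vec nc \<Longrightarrow> (c \<cdot>\<^sub>m A) *\<^sub>v x = c \<cdot>\<^sub>v (A *\<^sub>v x)"
  by (rule eq_vecI) (auto simp: scalar_prod_def sum_distrib_left ac_simps)

lemma transp_sp: "(A::real mat) \<in> carrier_mat nr nc \<Longrightarrow> x \<in> carrier_vec nc \<Longrightarrow> y \<in> carrier_vec nr \<Longrightarrow>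
   x \<bullet> (transpose_mat A *\<^sub>v y) = (A *\<^sub>v x) \<bullet> y"
  using transpose_vec_mult_scalar[of A nr nc x y] comm_scalar_prod[of x nc "transpose_mat A *\<^sub>v y"]
    comm_scalar_prod[of y nr "A *\<^sub>v x"] by auto

lemma append_cols_mv:
  assumes A: "A \<in> carrier_mat r k1" and B: "B \<in> carrier_mat r k2" and a: "a \<in> carrier_vec k1" and b: "b \<in> carrier_vec k2"
  shows "append_cols A B *\<^sub>v (a @\<^sub>v b) = A *\<^sub>v a + B *\<^sub>v b"
proof -
  have "append_cols A B = four_block_mat A B (0\<^sub>m 0 k1) (0\<^sub>m 0 k2)" using A B by (subst append_cols_four) auto
  then have "append_cols A B *\<^sub>v (a @\<^sub>v b) = (A *\<^sub>v a + B *\<^sub>v b) @\<^sub>v (0\<^sub>m 0 k1 *\<^sub>v a + 0\<^sub>m 0 k2 *\<^sub>v b)"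
    using four_block_mat_mult_vec[OF A B zero_carrier_mat zero_carrier_mat a b] by simp
  also have "\<dots> = A *\<^sub>v a + B *\<^sub>v b" by (rule eq_vecI) (use A B in auto)
  finally show ?thesis .
qed

lemma LMI_expand:
  assumes M: "M \<in> carrier_mat K K" and Ae: "Ae \<in> carrier_mat K K" and W: "W \<in> carrier_mat K n"
    and V: "V \<in> carrier_mat K m" and Q: "Q \<in> carrier_mat n n" and R: "R \<in> carrier_mat m m"
    and x: "x \<in> carrier_vec K" and w: "w \<in> carrier_vec n" and v: "v \<in> carrier_vec m"
  shows "((x @\<^sub>v w) @\<^sub>v v) \<bullet> (LMI_mat n m \<gamma> \<alpha> M Ae W V Q R *\<^sub>v ((x @\<^sub>v w) @\<^sub>v v)) =
    (\<gamma> - 2 * \<alpha>) * (x \<bullet> (M *\<^sub>v x)) - (Ae *\<^sub>v x) \<bullet> (M *\<^sub>v x) - x \<bullet> (M *\<^sub>v (Ae *\<^sub>v x))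
    - x \<bullet> (M *\<^sub>v (W *\<^sub>v w)) - (W *\<^sub>v w) \<bullet> (M *\<^sub>v x) + \<alpha> * (w \<bullet> (Q *\<^sub>v w))
    + x \<bullet> (M *\<^sub>v (V *\<^sub>v v)) + (V *\<^sub>v v) \<bullet> (M *\<^sub>v x) + \<alpha> * (v \<bullet> (R *\<^sub>v v))"
proof -
  define T11 where "T11 = (\<gamma> - 2 * \<alpha>) \<cdot>\<^sub>m M - transpose_mat Ae * M - M * Ae"
  have T11: "T11 \<in> carrier_mat K K" unfolding T11_def using M Ae by auto
  have MW: "- (M * W) \<in> carrier_mat K n" using M W by auto
  have WM: "- (transpose_mat W * M) \<in> carrier_mat n K" using M W by auto
  have aQ: "\<alpha> \<cdot>\<^sub>m Q \<in> carrier_mat n n" using Q by auto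
  have B2: "M * V @\<^sub>r 0\<^sub>m n m \<in> carrier_mat (K+n) m" using M V by auto
  have C2: "append_cols (transpose_mat V * M) (0\<^sub>m m n) \<in> carrier_mat m (K+n)" using M V by auto
  have aR: "\<alpha> \<cdot>\<^sub>m R \<in> carrier_mat m m" using R by auto
  have T: "four_block_mat T11 (- (M * W)) (- (transpose_mat W * M)) (\<alpha> \<cdot>\<^sub>m Q) \<in> carrier_mat (K+n) (K+n)"
    using T11 aQ by auto
  have xw: "x @\<^sub>v w \<in> carrier_vec (K+n)" using x w by auto
  define u1 where "u1 = T11 *\<^sub>v x + (- (M * W)) *\<^sub>v w"
  define u2 where "u2 = (- (transpose_mat W * M)) *\<^sub>v x + (\<alpha> \<cdot>\<^sub>m Q) *\<^sub>v w"
  define u3 where "u3 = (M * V) *\<^sub>v v"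
  define u5 where "u5 = (transpose_mat V * M) *\<^sub>v x"
  define u6 where "u6 = (\<alpha> \<cdot>\<^sub>m R) *\<^sub>v v"
  have VtM: "transpose_mat V * M \<in> carrier_mat m K" using M V by simp
  have u1: "u1 \<in> carrier_vec K" unfolding u1_def
    by (rule add_carrier_vec[OF mult_mat_vec_carrier[OF T11 x] mult_mat_vec_carrier[OF MW w]])
  have u2: "u2 \<in> carrier_vec n" unfolding u2_def
    by (rule add_carrier_vec[OF mult_mat_vec_carrier[OF WM x] mult_mat_vec_carrier[OF aQ w]])
  have u3: "u3 \<in> carrier_vec K" unfolding u3_def
    by (rule mult_mat_vec_carrier[OF mult_carrier_mat[OF M V] v])
  have u5: "u5 \<in> carrier_vec m" unfolding u5_def
    by (rule mult_mat_vec_carrier[OF VtM x])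
  have u6: "u6 \<in> carrier_vec m" unfolding u6_def
    by (rule mult_mat_vec_carrier[OF aR v])
  have L1: "four_block_mat T11 (- (M * W)) (- (transpose_mat W * M)) (\<alpha> \<cdot>\<^sub>m Q) *\<^sub>v (x @\<^sub>v w) = u1 @\<^sub>v u2"
    unfolding u1_def u2_def by (rule four_block_mat_mult_vec[OF T11 MW WM aQ x w])
  have L2: "(M * V @\<^sub>r 0\<^sub>m n m) *\<^sub>v v = u3 @\<^sub>v 0\<^sub>v n"
    unfolding u3_def using mat_mult_append[of "M * V" K m "0\<^sub>m n m" n v] M V v by auto
  have L3: "append_cols (transpose_mat V * M) (0\<^sub>m m n) *\<^sub>v (x @\<^sub>v w) = u5"
    unfolding u5_def using append_cols_mv[of "transpose_mat V * M" m K "0\<^sub>m m n" n x w] M V x w by auto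
  have "LMI_mat n m \<gamma> \<alpha> M Ae W V Q R *\<^sub>v ((x @\<^sub>v w) @\<^sub>v v) = ((u1 @\<^sub>v u2) + (u3 @\<^sub>v 0\<^sub>v n)) @\<^sub>v (u5 + u6)"
    unfolding LMI_mat_def T11_def[symmetric] u6_def
    using four_block_mat_mult_vec[OF T B2 C2 aR xw v] L1 L2 L3 by simp
  also have "(u1 @\<^sub>v u2) + (u3 @\<^sub>v 0\<^sub>v n) = (u1 + u3) @\<^sub>v (u2 + 0\<^sub>v n)"
    using u1 u2 u3 by (intro append_vec_add) auto
  finally have LZ: "LMI_mat n m \<gamma> \<alpha> M Ae W V Q R *\<^sub>v ((x @\<^sub>v w) @\<^sub>v v) = ((u1 + u3) @\<^sub>v u2) @\<^sub>v (u5 + u6)"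
    using u2 by simp
  have "((x @\<^sub>v w) @\<^sub>v v) \<bullet> (((u1 + u3) @\<^sub>v u2) @\<^sub>v (u5 + u6)) = (x @\<^sub>v w) \<bullet> ((u1 + u3) @\<^sub>v u2) + v \<bullet> (u5 + u6)"
    using xw v u1 u2 u3 u5 u6 by (intro scalar_prod_append) auto
  also have "(x @\<^sub>v w) \<bullet> ((u1 + u3) @\<^sub>v u2) = x \<bullet> (u1 + u3) + w \<bullet> u2"
    using x w u1 u2 u3 by (intro scalar_prod_append) auto
  finally have E0: "((x @\<^sub>v w) @\<^sub>v v) \<bullet> (LMI_mat n m \<gamma> \<alpha> M Ae W V Q R *\<^sub>v ((x @\<^sub>v w) @\<^sub>v v)) =
     x \<bullet> u1 + x \<bullet> u3 + w \<bullet> u2 + v \<bullet> u5 + v \<bullet> u6"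
    unfolding LZ using x u1 u3 v u5 u6 by (simp add: scalar_prod_add_distrib[of _ K] scalar_prod_add_distrib[of _ m])
  have Mx: "M *\<^sub>v x \<in> carrier_vec K" using M x by auto
  have Aex: "Ae *\<^sub>v x \<in> carrier_vec K" using Ae x by auto
  have Ww: "W *\<^sub>v w \<in> carrier_vec K" using W w by auto
  have T11x: "T11 *\<^sub>v x = (\<gamma> - 2 * \<alpha>) \<cdot>\<^sub>v (M *\<^sub>v x) - transpose_mat Ae *\<^sub>v (M *\<^sub>v x) - M *\<^sub>v (Ae *\<^sub>v x)"
  proof -
    have c1: "(\<gamma> - 2 * \<alpha>) \<cdot>\<^sub>m M \<in> carrier_mat K K" "transpose_mat Ae * M \<in> carrier_mat K K" "M * Ae \<in> carrier_mat K K"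
      using M Ae by auto
    have "T11 *\<^sub>v x = ((\<gamma> - 2 * \<alpha>) \<cdot>\<^sub>m M - transpose_mat Ae * M) *\<^sub>v x - (M * Ae) *\<^sub>v x"
      unfolding T11_def using c1 x minus_carrier_mat[OF c1(2)] by (intro minus_mult_distrib_mat_vec) auto
    also have "((\<gamma> - 2 * \<alpha>) \<cdot>\<^sub>m M - transpose_mat Ae * M) *\<^sub>v x = ((\<gamma> - 2 * \<alpha>) \<cdot>\<^sub>m M) *\<^sub>v x - (transpose_mat Ae * M) *\<^sub>v x"
      using c1 x by (intro minus_mult_distrib_mat_vec) auto
    also have "((\<gamma> - 2 * \<alpha>) \<cdot>\<^sub>m M) *\<^sub>v x = (\<gamma> - 2 * \<alpha>) \<cdot>\<^sub>v (M *\<^sub>v x)" using M x by (rule smult_mv)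
    also have "(transpose_mat Ae * M) *\<^sub>v x = transpose_mat Ae *\<^sub>v (M *\<^sub>v x)" using M Ae x by simp
    also have "(M * Ae) *\<^sub>v x = M *\<^sub>v (Ae *\<^sub>v x)" using M Ae x by simp
    finally show ?thesis .
  qed
  have t1: "x \<bullet> u1 = (\<gamma> - 2 * \<alpha>) * (x \<bullet> (M *\<^sub>v x)) - (Ae *\<^sub>v x) \<bullet> (M *\<^sub>v x) - x \<bullet> (M *\<^sub>v (Ae *\<^sub>v x))
    - x \<bullet> (M *\<^sub>v (W *\<^sub>v w))"
  proof -
    have "x \<bullet> u1 = x \<bullet> ((\<gamma> - 2 * \<alpha>) \<cdot>\<^sub>v (M *\<^sub>v x)) - x \<bullet> (transpose_mat Ae *\<^sub>v (M *\<^sub>v x)) - x \<bullet> (M *\<^sub>v (Ae *\<^sub>v x))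
      + x \<bullet> (- (M *\<^sub>v (W *\<^sub>v w)))"
      unfolding u1_def T11x using M Ae W x w Mx Aex Ww
      by (simp add: scalar_prod_add_distrib[of _ K] scalar_prod_minus_distrib[of _ K])
    also have "x \<bullet> (transpose_mat Ae *\<^sub>v (M *\<^sub>v x)) = (Ae *\<^sub>v x) \<bullet> (M *\<^sub>v x)"
      using Ae x Mx by (rule transp_sp)
    finally show ?thesis using x Mx M W w by simp
  qed
  have t3: "x \<bullet> u3 = x \<bullet> (M *\<^sub>v (V *\<^sub>v v))" unfolding u3_def using M V v by simp
  have t2: "w \<bullet> u2 = - ((W *\<^sub>v w) \<bullet> (M *\<^sub>v x)) + \<alpha> * (w \<bullet> (Q *\<^sub>v w))"
  proof -
    have "w \<bullet> u2 = w \<bullet> (- (transpose_mat W *\<^sub>v (M *\<^sub>v x))) + w \<bullet> (\<alpha> \<cdot>\<^sub>v (Q *\<^sub>v w))"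
      unfolding u2_def using M W Q x w by (simp add: scalar_prod_add_distrib[of _ n] smult_mv[of _ n n])
    also have "\<dots> = - (w \<bullet> (transpose_mat W *\<^sub>v (M *\<^sub>v x))) + \<alpha> * (w \<bullet> (Q *\<^sub>v w))"
      using w M x W Q by simp
    also have "w \<bullet> (transpose_mat W *\<^sub>v (M *\<^sub>v x)) = (W *\<^sub>v w) \<bullet> (M *\<^sub>v x)"
      using W w Mx by (rule transp_sp)
    finally show ?thesis .
  qed
  have t5: "v \<bullet> u5 = (V *\<^sub>v v) \<bullet> (M *\<^sub>v x)"
    unfolding u5_def using M V x v transp_sp[OF V v Mx] by simp
  have t6: "v \<bullet> u6 = \<alpha> * (v \<bullet> (R *\<^sub>v v))" unfolding u6_def using R v by (simp add: smult_mv[of _ m m])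
  show ?thesis unfolding E0 t1 t2 t3 t5 t6 by simp
qed




theorem lemma5:
  fixes N n :: nat and p md :: "nat \<Rightarrow> nat"
    and E :: "nat \<Rightarrow> nat \<Rightarrow> bool"
    and A P Q R S \<Lambda> :: "real mat"
    and Bs Ks Cs Ls :: "real mat list"
    and \<eta> \<gamma> :: real
    and e w v :: "real \<Rightarrow> real vec" and t :: real
  defines "m \<equiv> (\<Sum>i<N. md i)"
      and "Lap \<equiv> laplacian N E"
  assumes N2: "N \<ge> 2"
    and graph: "undirected_graph N E" "connected_graph N E"
    and eta: "\<eta> \<ge> 0"
    and A_dim: "A \<in> carrier_mat n n"
    and lens: "length Bs = N" "length Ks = N" "length Cs = N" "length Ls = N"
    and B_dim: "\<forall>i<N. Bs ! i \<in> carrier_mat n (p i)"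
    and K_dim: "\<forall>i<N. Ks ! i \<in> carrier_mat (p i) n"
    and C_dim: "\<forall>i<N. Cs ! i \<in> carrier_mat (md i) n"
    and L_dim: "\<forall>i<N. Ls ! i \<in> carrier_mat n (md i)"
    and P_pd: "pos_def (N * n) P" and Q_pd: "pos_def n Q" and R_pd: "pos_def m R"
    and S_dim: "S \<in> carrier_mat N (N - 1)"
    and S_orth1: "mat 1 N (\<lambda>_. 1) * S = 0\<^sub>m 1 (N - 1)"
    and S_orthn: "transpose_mat S * S = 1\<^sub>m (N - 1)"
    and S_diag: "transpose_mat S * Lap * S = \<Lambda>"
    and Lambda: "\<Lambda> \<in> carrier_mat (N - 1) (N - 1)" "diagonal_mat \<Lambda>"
       "\<forall>i<N - 1. \<Lambda> $$ (i, i) > 0 \<and> eigenvalue Lap (\<Lambda> $$ (i, i))"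
    and LMI: "\<exists>\<alpha>\<^sub>3 \<ge> 0. pos_def (N * n + n + m)
       (LMI_mat n m \<gamma> \<alpha>\<^sub>3 (transpose_mat (Ebar N n S) * P * Ebar N n S)
          (Aebar N n A Bs Ks Cs Ls \<eta> S \<Lambda>) (Wbar N n S) (Vbar N n S Ls) Q R)"
    and e_dim: "\<forall>s. e s \<in> carrier_vec (N * n)"
    and w_dim: "w t \<in> carrier_vec n" and v_dim: "v t \<in> carrier_vec m"
    and ode: "\<forall>i < N * n. ((\<lambda>s. e s $ i) has_real_derivative
       (((Fbar N n A Bs Ks Cs Ls - \<eta> \<cdot>\<^sub>m kron Lap (1\<^sub>m n)) *\<^sub>v e t
         + Istack N n *\<^sub>v w t - Jbar N Ls *\<^sub>v v t) $ i)) (at t)"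
    and w_bd: "w t \<bullet> (Q *\<^sub>v w t) \<le> 1"
    and v_bd: "v t \<bullet> (R *\<^sub>v v t) \<le> 1"
    and e_big: "e t \<bullet> (P *\<^sub>v e t) \<ge> 1"
  shows "\<exists>D. ((\<lambda>s. e s \<bullet> (P *\<^sub>v e s)) has_real_derivative D) (at t)
            \<and> D < \<gamma> * (e t \<bullet> (P *\<^sub>v e t))"
proof -
  have ok: "sysok N n p md A Bs Ks Cs Ls" unfolding sysok_def using A_dim lens B_dim K_dim C_dim L_dim by auto
  have N1: "N \<ge> 1" using N2 by simp
  obtain \<alpha> where al: "\<alpha> \<ge> 0" and pd: "pos_def (N * n + n + m)
       (LMI_mat n m \<gamma> \<alpha> (transpose_mat (Ebar N n S) * P * Ebar N n S)
          (Aebar N n A Bs Ks Cs Ls \<eta> S \<Lambda>) (Wbar N n S) (Vbar N n S Ls) Q R)" using LMI by auto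
  define K where "K = N * n"
  define Einv where "Einv = ((1 / real N) \<cdot>\<^sub>m transpose_mat (Istack N n)) @\<^sub>r kron (transpose_mat S) (1\<^sub>m n)"
  define X where "X = Fbar N n A Bs Ks Cs Ls - \<eta> \<cdot>\<^sub>m kron (laplacian N E) (1\<^sub>m n)"
  define Eb where "Eb = Ebar N n S"
  define Is where "Is = Istack N n"
  define J where "J = Jbar N Ls"
  define Mm where "Mm = transpose_mat Eb * P * Eb"
  define Ae where "Ae = Aebar N n A Bs Ks Cs Ls \<eta> S \<Lambda>"
  define W where "W = Wbar N n S"
  define V where "V = Vbar N n S Ls"
  note BI = block_ids[OF ok N1 graph(1) S_dim S_orth1 S_orthn S_diag[unfolded Lap_def] Lambda(1)]
  have C1: "Eb * Einv = 1\<^sub>m K" using BI(1) unfolding Eb_def Einv_def K_def .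
  have C2: "Ae = Einv * X * Eb" using BI(2) unfolding Ae_def Einv_def X_def Eb_def .
  have C3: "W = Einv * Is" using BI(3) unfolding W_def Einv_def Is_def .
  have C4: "V = Einv * J" using BI(4) unfolding V_def Einv_def J_def .
  have hK: "n + (N - 1) * n = K" unfolding K_def using N1 by (cases N) auto
  have P: "P \<in> carrier_mat K K" using P_pd unfolding pos_def_def K_def by auto
  have Q: "Q \<in> carrier_mat n n" using Q_pd unfolding pos_def_def by auto
  have R: "R \<in> carrier_mat m m" using R_pd unfolding pos_def_def by auto
  have Is: "Is \<in> carrier_mat K n" unfolding Is_def K_def by simp
  have Eb: "Eb \<in> carrier_mat K K"
  proof -
    have "kron S (1\<^sub>m n) \<in> carrier_mat (N * n) ((N - 1) * n)" using S_dim by auto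
    then have "Eb \<in> carrier_mat (N*n) (n + (N - 1) * n)" unfolding Eb_def Ebar_def
      using Istack_dims(1) by (rule_tac append_cols_carrier) auto
    then show ?thesis unfolding hK K_def .
  qed
  have Einv: "Einv \<in> carrier_mat K K"
  proof -
    have "(1 / real N) \<cdot>\<^sub>m transpose_mat (Istack N n) \<in> carrier_mat n (N*n)" by simp
    moreover have "kron (transpose_mat S) (1\<^sub>m n) \<in> carrier_mat ((N - 1) * n) (N * n)" using S_dim by auto
    ultimately have "Einv \<in> carrier_mat (n + (N - 1) * n) (N*n)" unfolding Einv_def by (rule carrier_append_rows)
    then show ?thesis unfolding hK K_def .
  qed
  have Xc: "X \<in> carrier_mat K K" unfolding X_def K_def by auto
  have J: "J \<in> carrier_mat K m"
  proof -
    have Ldim: "\<forall>L\<in>set Ls. dim_row L = n"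
    proof
      fix L assume "L \<in> set Ls"
      then obtain i where i: "i < N" "L = Ls ! i" using lens by (auto simp: in_set_conv_nth)
      have "Ls ! i \<in> carrier_mat n (md i)" using L_dim i by auto
      then show "dim_row L = n" using i by auto
    qed
    have "sum_list (map dim_col Ls) = (\<Sum>i<N. dim_col (Ls ! i))"
      by (simp add: sum_list_sum_nth lens lessThan_atLeast0)
    also have "\<dots> = m" unfolding m_def using L_dim by (intro sum.cong refl) auto
    finally have sm: "sum_list (map dim_col Ls) = m" .
    have "diag_block_mat Ls \<in> carrier_mat (N * n) m" using IsT_diag[OF Ldim] sm lens by auto
    then show ?thesis unfolding J_def Jbar_def K_def by auto
  qed
  have Mm: "Mm \<in> carrier_mat K K" unfolding Mm_def using Eb P by auto
  have Ae: "Ae \<in> carrier_mat K K" unfolding C2 using Einv Xc Eb by auto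
  have W: "W \<in> carrier_mat K n" unfolding C3 using Einv Is by auto
  have V: "V \<in> carrier_mat K m" unfolding C4 using Einv J by auto
  define et where "et = e t"
  have et: "et \<in> carrier_vec K" unfolding et_def K_def using e_dim by auto
  define \<xi> where "\<xi> = Einv *\<^sub>v et"
  have xi: "\<xi> \<in> carrier_vec K" unfolding \<xi>_def using Einv et by auto
  have EE: "Eb *\<^sub>v (Einv *\<^sub>v y) = y" if y: "y \<in> carrier_vec K" for y
  proof -
    have "Eb *\<^sub>v (Einv *\<^sub>v y) = (Eb * Einv) *\<^sub>v y" using Eb Einv y by simp
    then show ?thesis unfolding C1 using y by simp
  qed
  have Ebxi: "Eb *\<^sub>v \<xi> = et" unfolding \<xi>_def by (rule EE[OF et])
  have Mform: "u \<bullet> (Mm *\<^sub>v y) = (Eb *\<^sub>v u) \<bullet> (P *\<^sub>v (Eb *\<^sub>v y))"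
    if u: "u \<in> carrier_vec K" and y: "y \<in> carrier_vec K" for u y
  proof -
    have EtP: "transpose_mat Eb * P \<in> carrier_mat K K" using Eb P by auto
    have "Mm *\<^sub>v y = (transpose_mat Eb * P) *\<^sub>v (Eb *\<^sub>v y)" unfolding Mm_def
      by (rule assoc_mult_mat_vec[OF EtP Eb y])
    also have "\<dots> = transpose_mat Eb *\<^sub>v (P *\<^sub>v (Eb *\<^sub>v y))"
      using Eb P y by (intro assoc_mult_mat_vec[of _ K K]) auto
    finally have "Mm *\<^sub>v y = transpose_mat Eb *\<^sub>v (P *\<^sub>v (Eb *\<^sub>v y))" .
    then show ?thesis using transp_sp[OF Eb u, of "P *\<^sub>v (Eb *\<^sub>v y)"] P Eb y by simp
  qed
  define wt where "wt = w t"
  define vt where "vt = v t"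
  have wt: "wt \<in> carrier_vec n" and vt: "vt \<in> carrier_vec m" unfolding wt_def vt_def using w_dim v_dim by auto
  define Xe where "Xe = X *\<^sub>v et"
  define Iw where "Iw = Is *\<^sub>v wt"
  define Jv where "Jv = J *\<^sub>v vt"
  have Xe: "Xe \<in> carrier_vec K" and Iw: "Iw \<in> carrier_vec K" and Jv: "Jv \<in> carrier_vec K"
    unfolding Xe_def Iw_def Jv_def using Xc et Is wt J vt by auto
  have Aexi: "Eb *\<^sub>v (Ae *\<^sub>v \<xi>) = Xe"
  proof -
    have EX: "Einv * X \<in> carrier_mat K K" using Einv Xc by auto
    have "Ae *\<^sub>v \<xi> = (Einv * X) *\<^sub>v (Eb *\<^sub>v \<xi>)" unfolding C2 by (rule assoc_mult_mat_vec[OF EX Eb xi])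
    also have "\<dots> = Einv *\<^sub>v (X *\<^sub>v (Eb *\<^sub>v \<xi>))" using Einv Xc Eb xi by (intro assoc_mult_mat_vec[of _ K K]) auto
    finally have "Ae *\<^sub>v \<xi> = Einv *\<^sub>v (X *\<^sub>v (Eb *\<^sub>v \<xi>))" .
    then show ?thesis unfolding Ebxi Xe_def using EE Xc et by simp
  qed
  have Wwt: "Eb *\<^sub>v (W *\<^sub>v wt) = Iw"
  proof -
    have "W *\<^sub>v wt = Einv *\<^sub>v Iw" unfolding C3 Iw_def using Einv Is wt by simp
    then show ?thesis using EE Iw by simp
  qed
  have Vvt: "Eb *\<^sub>v (V *\<^sub>v vt) = Jv"
  proof -
    have "V *\<^sub>v vt = Einv *\<^sub>v Jv" unfolding C4 Jv_def using Einv J vt by simp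
    then show ?thesis using EE Jv by simp
  qed
  have Aex: "Ae *\<^sub>v \<xi> \<in> carrier_vec K" using Ae xi by auto
  have Wx: "W *\<^sub>v wt \<in> carrier_vec K" using W wt by auto
  have Vx: "V *\<^sub>v vt \<in> carrier_vec K" using V vt by auto
  define a where "a = et \<bullet> (P *\<^sub>v et)"
  have a1: "a \<ge> 1" unfolding a_def et_def using e_big .
  have xi0: "\<xi> \<noteq> 0\<^sub>v K"
  proof
    assume "\<xi> = 0\<^sub>v K"
    then have "et = 0\<^sub>v K" using Ebxi Eb by auto
    then have "a = 0" unfolding a_def using P by auto
    then show False using a1 by simp
  qed
  define z where "z = (\<xi> @\<^sub>v wt) @\<^sub>v vt"
  have z: "z \<in> carrier_vec (N * n + n + m)" unfolding z_def K_def[symmetric] using xi wt vt by auto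
  have z0: "z \<noteq> 0\<^sub>v (N * n + n + m)"
  proof
    assume z0: "z = 0\<^sub>v (N * n + n + m)"
    have "\<xi> = 0\<^sub>v K"
    proof (rule eq_vecI)
      fix i assume "i < dim_vec (0\<^sub>v K)"
      then have i: "i < K" by simp
      have "z $ i = \<xi> $ i" unfolding z_def using i xi wt vt by simp
      then show "\<xi> $ i = 0\<^sub>v K $ i" using z0 i unfolding K_def by simp
    qed (use xi in simp)
    then show False using xi0 by simp
  qed
  have pos: "z \<bullet> (LMI_mat n m \<gamma> \<alpha> Mm Ae W V Q R *\<^sub>v z) > 0"
    using pd z z0 unfolding pos_def_def Mm_def Eb_def Ae_def W_def V_def by auto
  have expand: "z \<bullet> (LMI_mat n m \<gamma> \<alpha> Mm Ae W V Q R *\<^sub>v z) =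
    (\<gamma> - 2 * \<alpha>) * a - Xe \<bullet> (P *\<^sub>v et) - et \<bullet> (P *\<^sub>v Xe)
    - et \<bullet> (P *\<^sub>v Iw) - Iw \<bullet> (P *\<^sub>v et) + \<alpha> * (wt \<bullet> (Q *\<^sub>v wt))
    + et \<bullet> (P *\<^sub>v Jv) + Jv \<bullet> (P *\<^sub>v et) + \<alpha> * (vt \<bullet> (R *\<^sub>v vt))"
    unfolding z_def LMI_expand[OF Mm Ae W V Q R xi wt vt]
    unfolding Mform[OF xi xi] Mform[OF Aex xi] Mform[OF xi Aex] Mform[OF xi Wx] Mform[OF Wx xi]
      Mform[OF xi Vx] Mform[OF Vx xi] Ebxi Aexi Wwt Vvt a_def ..
  define d where "d = Xe + Iw - Jv"
  have d: "d \<in> carrier_vec K" unfolding d_def using Xe Iw Jv by auto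
  have der: "\<forall>i<K. ((\<lambda>s. e s $ i) has_real_derivative (d $ i)) (at t)"
    using ode unfolding d_def Xe_def Iw_def Jv_def X_def Is_def J_def et_def wt_def vt_def K_def Lap_def .
  have DQ: "((\<lambda>s. e s \<bullet> (P *\<^sub>v e s)) has_real_derivative (d \<bullet> (P *\<^sub>v et) + et \<bullet> (P *\<^sub>v d))) (at t)"
    using deriv_quad[of e K P d t] e_dim P d der unfolding K_def et_def by auto
  have Pe: "P *\<^sub>v et \<in> carrier_vec K" using P et by auto
  have d1: "d \<bullet> (P *\<^sub>v et) = Xe \<bullet> (P *\<^sub>v et) + Iw \<bullet> (P *\<^sub>v et) - Jv \<bullet> (P *\<^sub>v et)"
    unfolding d_def using Xe Iw Jv Pe
    by (simp add: minus_scalar_prod_distrib[of _ K] add_scalar_prod_distrib[of _ K])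
  have d2: "et \<bullet> (P *\<^sub>v d) = et \<bullet> (P *\<^sub>v Xe) + et \<bullet> (P *\<^sub>v Iw) - et \<bullet> (P *\<^sub>v Jv)"
  proof -
    have "P *\<^sub>v d = P *\<^sub>v Xe + P *\<^sub>v Iw - P *\<^sub>v Jv" unfolding d_def using P Xe Iw Jv
      by (simp add: mult_minus_distrib_mat_vec[of _ K K] mult_add_distrib_mat_vec[of _ K K])
    then show ?thesis using et P Xe Iw Jv
      by (simp add: scalar_prod_minus_distrib[of _ K] scalar_prod_add_distrib[of _ K])
  qed
  have qw: "\<alpha> * (wt \<bullet> (Q *\<^sub>v wt)) \<le> \<alpha>" using al w_bd unfolding wt_def by (simp add: mult_left_le)
  have qv: "\<alpha> * (vt \<bullet> (R *\<^sub>v vt)) \<le> \<alpha>" using al v_bd unfolding vt_def by (simp add: mult_left_le)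
  have qa: "\<alpha> \<le> \<alpha> * a" using al a1 by (simp add: mult_le_cancel_left1)
  show ?thesis
  proof (intro exI conjI)
    show "((\<lambda>s. e s \<bullet> (P *\<^sub>v e s)) has_real_derivative (d \<bullet> (P *\<^sub>v et) + et \<bullet> (P *\<^sub>v d))) (at t)" by (rule DQ)
    show "d \<bullet> (P *\<^sub>v et) + et \<bullet> (P *\<^sub>v d) < \<gamma> * (e t \<bullet> (P *\<^sub>v e t))"
      using pos unfolding expand d1 d2 et_def[symmetric] a_def[symmetric] using qw qv qa
      by (simp add: algebra_simps)
  qed
qed


end
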